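(* Consider shadow estimation with random sampling of $g$ from the Clifford group $\mathrm{Cl}_n$ according to an arbitrary probability distribution $p$ such that $S$ is invertible, with noise channels $\Lambda(g)$. Then for an observable $O$ and a state $\rho$ the second moment of the estimator is $$\mathbb{E}(\hat o^2)=\frac1{\sqrt d}\sum_{\substack{a,a'\in\mathbb{F}_2^{2n}:\\ [a,a']=0}}\frac{s_{a,a'}}{s_as_{a'}}(O|\hat\sigma_a)(O|\hat\sigma_{a'})\,(\hat\sigma_{a+a'}|\bar\Lambda_{a,a'}|\rho).$$
   Context: $d=2^n$; $(A|B)=\mathrm{Tr}(A^\dagger B)$, $(A|\mathcal X|B)=\mathrm{Tr}(A^\dagger\mathcal X(B))$; $|A)(B|$ is $C\mapsto(B|C)A$; $\omega(g)(A)=gAg^\dagger$, $\omega(g)^\dagger(A)=g^\dagger Ag$; $E_x=|x\rangle\langle x|$, $M=\sum_x|E_x)(E_x|$, $S=\sum_gp(g)\omega(g)^\dagger M\omega(g)$. Protocol: $g\sim p$, apply $\omega(g)\Lambda(g)$ to $\rho$, measure computational basis obtaining $x$ with probability $\langle x|\omega(g)\Lambda(g)(\rho)|x\rangle$; estimator $\hat o(g,x)=(O|S^{-1}\omega(g)^\dagger|E_x)$. Paulis $\sigma_a$, $a\in\mathbb{F}_2^{2n}$ (per qubit $\sigma_{00}=\mathbb 1,\sigma_{01}=X,\sigma_{11}=Y,\sigma_{10}=Z$), $\hat\sigma_a=\sigma_a/\sqrt d$; $[a,a']=0$ iff $\sigma_a,\sigma_{a'}$ commute, and then $\sigma_a\sigma_{a'}=(-1)^{\beta(a,a')}\sigma_{a+a'}$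 (addition mod 2). $Z_z=\bigotimes_iZ^{z_i}$; $\Xi_z(g)$ is the Pauli $\sigma_b$ with $g^\dagger Z_zg=\pm\sigma_b$. $s_a=\sum_z\sum_{g:\Xi_z(g)=\sigma_a}p(g)$. For commuting $a,a'$: $r_{a,a'}=\sum_{z,z'\in\mathbb{F}_2^n}\sum_{g:\Xi_z(g)=\sigma_a,\Xi_{z'}(g)=\sigma_{a'}}p(g)$, $s_{a,a'}=(-1)^{\beta(a,a')}r_{a,a'}$, $\bar\Lambda_{a,a'}=r_{a,a'}^{-1}\sum_{z,z'}\sum_{g:\Xi_z(g)=\sigma_a,\Xi_{z'}(g)=\sigma_{a'}}p(g)\Lambda(g)$ (terms with $r_{a,a'}=0$ vanish). *)

theory Defs
  imports Complex_Main "Jordan_Normal_Form.Schur_Decomposition"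
begin

definition mtrace :: "complex mat \<Rightarrow> complex" where
  "mtrace A = (\<Sum>i<dim_row A. A $$ (i,i))"

definition hs :: "complex mat \<Rightarrow> complex mat \<Rightarrow> complex" where
  "hs A B = mtrace (mat_adjoint A * B)"

definition is_unitary :: "nat \<Rightarrow> complex mat \<Rightarrow> bool" where
  "is_unitary d U \<longleftrightarrow> U \<in> carrier_mat d d \<and> U * mat_adjoint U = 1\<^sub>m d \<and> mat_adjoint U * U = 1\<^sub>m d"

definition is_psd :: "nat \<Rightarrow> complex mat \<Rightarrow> bool" where
  "is_psd D A \<longleftrightarrow> A \<in> carrier_mat D D \<and>
     (\<forall>v \<in> carrier_vec D. \<exists>t::real. t \<ge> 0 \<and> (A *\<^sub>v v) \<bullet>c v = complex_of_real t)"

definition is_state :: "nat \<Rightarrow> complex mat \<Rightarrow> bool" where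
  "is_state d \<rho> \<longleftrightarrow> is_psd d \<rho> \<and> mtrace \<rho> = 1"

definition is_observable :: "nat \<Rightarrow> complex mat \<Rightarrow> bool" where
  "is_observable d Obs \<longleftrightarrow> Obs \<in> carrier_mat d d \<and> mat_adjoint Obs = Obs"

definition unitm :: "nat \<Rightarrow> nat \<Rightarrow> nat \<Rightarrow> complex mat" where
  "unitm d i j = mat d d (\<lambda>(r,c). if r = i \<and> c = j then 1 else 0)"

definition Eproj :: "nat \<Rightarrow> nat \<Rightarrow> complex mat" where
  "Eproj d x = unitm d x x"

definition is_linear_superop :: "nat \<Rightarrow> (complex mat \<Rightarrow> complex mat) \<Rightarrow> bool" where
  "is_linear_superop d \<Phi> \<longleftrightarrow>
     (\<forall>A \<in> carrier_mat d d. \<Phi> A \<in> carrier_mat d d) \<and>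
     (\<forall>A \<in> carrier_mat d d. \<forall>B \<in> carrier_mat d d. \<Phi> (A + B) = \<Phi> A + \<Phi> B) \<and>
     (\<forall>A \<in> carrier_mat d d. \<forall>c. \<Phi> (c \<cdot>\<^sub>m A) = c \<cdot>\<^sub>m \<Phi> A)"

text \<open>Choi matrix  sum_{i,j} |i><j| (x) Phi(|i><j|), index (i,k) -> i*d+k.\<close>
definition choi :: "nat \<Rightarrow> (complex mat \<Rightarrow> complex mat) \<Rightarrow> complex mat" where
  "choi d \<Phi> = mat (d*d) (d*d) (\<lambda>(r,c). \<Phi> (unitm d (r div d) (c div d)) $$ (r mod d, c mod d))"

definition is_channel :: "nat \<Rightarrow> (complex mat \<Rightarrow> complex mat) \<Rightarrow> bool" where
  "is_channel d \<Phi> \<longleftrightarrow> is_linear_superop d \<Phi> \<and>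
     (\<forall>A \<in> carrier_mat d d. mtrace (\<Phi> A) = mtrace A) \<and>
     is_psd (d*d) (choi d \<Phi>)"

text \<open>Elements of F_2^n are subsets of {..<n} (addition = symmetric difference).
  An element a of F_2^{2n} is a pair (az, ax); on qubit i the two bits are
  (i \<in> az, i \<in> ax), with 00 = 1, 01 = X, 11 = Y, 10 = Z.\<close>

definition bvecs :: "nat \<Rightarrow> nat set set" where
  "bvecs n = Pow {..<n}"

definition pidx :: "nat \<Rightarrow> (nat set \<times> nat set) set" where
  "pidx n = bvecs n \<times> bvecs n"

definition symd :: "nat set \<Rightarrow> nat set \<Rightarrow> nat set" where
  "symd A B = (A - B) \<union> (B - A)"

definition padd :: "nat set \<times> nat set \<Rightarrow> nat set \<times> nat set \<Rightarrow> nat set \<times> nat set" where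
  "padd a b = (symd (fst a) (fst b), symd (snd a) (snd b))"

definition sigma1 :: "bool \<Rightarrow> bool \<Rightarrow> bool \<Rightarrow> bool \<Rightarrow> complex" where
  "sigma1 zb xb r c =
     (if \<not> zb \<and> \<not> xb then (if r = c then 1 else 0)
      else if \<not> zb \<and> xb then (if r = c then 0 else 1)
      else if zb \<and> \<not> xb then (if r = c then (if r then -1 else 1) else 0)
      else (if r = c then 0 else (if r then \<i> else - \<i>)))"

definition pauli :: "nat \<Rightarrow> nat set \<times> nat set \<Rightarrow> complex mat" where
  "pauli n a = mat (2^n) (2^n)
     (\<lambda>(r,c). \<Prod>i<n. sigma1 (i \<in> fst a) (i \<in> snd a) (bit r i) (bit c i))"

definition npauli :: "nat \<Rightarrow> nat set \<times> nat set \<Rightarrow> complex mat" where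
  "npauli n a = (1 / complex_of_real (sqrt (real (2^n)))) \<cdot>\<^sub>m pauli n a"

definition pauli_group :: "nat \<Rightarrow> complex mat set" where
  "pauli_group n = {(\<i> ^ k) \<cdot>\<^sub>m pauli n a | k a. a \<in> pidx n}"

definition pcommute :: "nat \<Rightarrow> nat set \<times> nat set \<Rightarrow> nat set \<times> nat set \<Rightarrow> bool" where
  "pcommute n a b \<longleftrightarrow> pauli n a * pauli n b = pauli n b * pauli n a"

text \<open>beta(a,a'): sigma_a sigma_a' = (-1)^beta sigma_{a+a'} for commuting a, a'.\<close>
definition pbeta :: "nat \<Rightarrow> nat set \<times> nat set \<Rightarrow> nat set \<times> nat set \<Rightarrow> nat" where
  "pbeta n a b = (THE k. k < 2 \<and> pauli n a * pauli n b = ((-1) ^ k) \<cdot>\<^sub>m pauli n (padd a b))"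

definition Zop :: "nat \<Rightarrow> nat set \<Rightarrow> complex mat" where
  "Zop n z = mat (2^n) (2^n)
     (\<lambda>(r,c). if r = c then (\<Prod>i<n. if i \<in> z \<and> bit r i then -1 else 1) else 0)"

definition is_clifford :: "nat \<Rightarrow> complex mat \<Rightarrow> bool" where
  "is_clifford n g \<longleftrightarrow> is_unitary (2^n) g \<and>
     (\<forall>a \<in> pidx n. g * pauli n a * mat_adjoint g \<in> pauli_group n)"

definition Xi :: "nat \<Rightarrow> complex mat \<Rightarrow> nat set \<Rightarrow> nat set \<times> nat set" where
  "Xi n g z = (THE b. b \<in> pidx n \<and>
      (mat_adjoint g * Zop n z * g = pauli n b \<or> mat_adjoint g * Zop n z * g = - pauli n b))"

definition Mch :: "nat \<Rightarrow> complex mat \<Rightarrow> complex mat" where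
  "Mch n A = mat (2^n) (2^n) (\<lambda>(i,j). \<Sum>x<2^n. hs (Eproj (2^n) x) A * Eproj (2^n) x $$ (i,j))"

definition Sop :: "nat \<Rightarrow> complex mat set \<Rightarrow> (complex mat \<Rightarrow> real) \<Rightarrow> complex mat \<Rightarrow> complex mat" where
  "Sop n G p A = mat (2^n) (2^n) (\<lambda>(i,j).
     \<Sum>g\<in>G. complex_of_real (p g) * (mat_adjoint g * Mch n (g * A * mat_adjoint g) * g) $$ (i,j))"

definition Sinv :: "nat \<Rightarrow> complex mat set \<Rightarrow> (complex mat \<Rightarrow> real) \<Rightarrow> complex mat \<Rightarrow> complex mat" where
  "Sinv n G p = the_inv_into (carrier_mat (2^n) (2^n)) (Sop n G p)"

definition ohat :: "nat \<Rightarrow> complex mat set \<Rightarrow> (complex mat \<Rightarrow> real) \<Rightarrow> complex mat \<Rightarrow> complex mat \<Rightarrow> nat \<Rightarrow> complex" where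
  "ohat n G p Obs g x = hs Obs (Sinv n G p (mat_adjoint g * Eproj (2^n) x * g))"

definition outprob :: "(complex mat \<Rightarrow> complex mat \<Rightarrow> complex mat) \<Rightarrow> complex mat \<Rightarrow> complex mat \<Rightarrow> nat \<Rightarrow> complex" where
  "outprob \<Lambda> \<rho> g x = (g * \<Lambda> g \<rho> * mat_adjoint g) $$ (x, x)"

definition second_moment :: "nat \<Rightarrow> complex mat set \<Rightarrow> (complex mat \<Rightarrow> real) \<Rightarrow>
    (complex mat \<Rightarrow> complex mat \<Rightarrow> complex mat) \<Rightarrow> complex mat \<Rightarrow> complex mat \<Rightarrow> complex" where
  "second_moment n G p \<Lambda> Obs \<rho> =
     (\<Sum>g\<in>G. complex_of_real (p g) * (\<Sum>x<2^n. outprob \<Lambda> \<rho> g x * (ohat n G p Obs g x)\<^sup>2))"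

definition s1 :: "nat \<Rightarrow> complex mat set \<Rightarrow> (complex mat \<Rightarrow> real) \<Rightarrow> nat set \<times> nat set \<Rightarrow> real" where
  "s1 n G p a = (\<Sum>z\<in>bvecs n. \<Sum>g\<in>{g\<in>G. Xi n g z = a}. p g)"

definition r2 :: "nat \<Rightarrow> complex mat set \<Rightarrow> (complex mat \<Rightarrow> real) \<Rightarrow> nat set \<times> nat set \<Rightarrow> nat set \<times> nat set \<Rightarrow> real" where
  "r2 n G p a b = (\<Sum>z\<in>bvecs n. \<Sum>z'\<in>bvecs n. \<Sum>g\<in>{g\<in>G. Xi n g z = a \<and> Xi n g z' = b}. p g)"

definition s2 :: "nat \<Rightarrow> complex mat set \<Rightarrow> (complex mat \<Rightarrow> real) \<Rightarrow> nat set \<times> nat set \<Rightarrow> nat set \<times> nat set \<Rightarrow> real" where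
  "s2 n G p a b = (-1) ^ pbeta n a b * r2 n G p a b"

text \<open>Lambda-bar_{a,a'} applied to a matrix (terms with r = 0 vanish, as 1/0 = 0).\<close>
definition Lbar :: "nat \<Rightarrow> complex mat set \<Rightarrow> (complex mat \<Rightarrow> real) \<Rightarrow> (complex mat \<Rightarrow> complex mat \<Rightarrow> complex mat)
     \<Rightarrow> nat set \<times> nat set \<Rightarrow> nat set \<times> nat set \<Rightarrow> complex mat \<Rightarrow> complex mat" where
  "Lbar n G p \<Lambda> a b A = mat (2^n) (2^n) (\<lambda>(i,j).
     complex_of_real (inverse (r2 n G p a b)) *
     (\<Sum>z\<in>bvecs n. \<Sum>z'\<in>bvecs n. \<Sum>g\<in>{g\<in>G. Xi n g z = a \<and> Xi n g z' = b}.
        complex_of_real (p g) * \<Lambda> g A $$ (i,j)))"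

end

theory Submission
  imports Defs
begin

lemma adj_dim[simp]: "dim_row (mat_adjoint (A::complex mat)) = dim_col A" "dim_col (mat_adjoint A) = dim_row A"
  unfolding mat_adjoint_def by auto

lemma adj_index[simp]: "i < dim_col A \<Longrightarrow> j < dim_row A \<Longrightarrow> mat_adjoint (A::complex mat) $$ (i,j) = cnj (A $$ (j,i))"
  unfolding mat_adjoint_def by (simp add: mat_of_rows_index)

lemma adj_carrier[simp]: "(A::complex mat) \<in> carrier_mat m k \<Longrightarrow> mat_adjoint A \<in> carrier_mat k m"
  by (metis adj_dim carrier_matD carrier_matI)

lemma mult_index: "A \<in> carrier_mat m k \<Longrightarrow> B \<in> carrier_mat k l \<Longrightarrow> i < m \<Longrightarrow> j < l \<Longrightarrow>
  (A * B) $$ (i,j) = (\<Sum>t<k. A $$ (i,t) * B $$ (t,j))"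
  by (auto simp: scalar_prod_def lessThan_atLeast0 intro!: sum.cong)

lemma adj_mult: fixes A B :: "complex mat" assumes "A \<in> carrier_mat m k" "B \<in> carrier_mat k l"
  shows "mat_adjoint (A * B) = mat_adjoint B * mat_adjoint A"
proof (rule eq_matI)
  fix i j assume ij: "i < dim_row (mat_adjoint B * mat_adjoint A)" "j < dim_col (mat_adjoint B * mat_adjoint A)"
  then have i: "i < l" and j: "j < m" using assms by auto
  have "mat_adjoint (A * B) $$ (i,j) = cnj ((A*B) $$ (j,i))" using i j assms by simp
  also have "\<dots> = (\<Sum>t<k. cnj (A $$ (j,t)) * cnj (B $$ (t,i)))"
    using i j assms by (simp del: index_mult_mat(1) add: mult_index[of A m k B l])
  also have "\<dots> = (mat_adjoint B * mat_adjoint A) $$ (i,j)"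
    using i j assms by (simp del: index_mult_mat(1) add: mult_index[of "mat_adjoint B" l k "mat_adjoint A" m] mult.commute)
  finally show "mat_adjoint (A * B) $$ (i,j) = (mat_adjoint B * mat_adjoint A) $$ (i,j)" .
qed (use assms in auto)

lemma adj_adj[simp]: "mat_adjoint (mat_adjoint A) = (A::complex mat)"
  by (rule eq_matI) auto

lemma adj_smult: "mat_adjoint (c \<cdot>\<^sub>m (A::complex mat)) = cnj c \<cdot>\<^sub>m mat_adjoint A"
  by (rule eq_matI) auto

lemma adj_uminus: "mat_adjoint (- (A::complex mat)) = - mat_adjoint A"
  by (rule eq_matI) auto

lemma hs_expand: assumes "A \<in> carrier_mat d d" "B \<in> carrier_mat d d"
  shows "hs A B = (\<Sum>i<d. \<Sum>k<d. cnj (A $$ (k,i)) * B $$ (k,i))"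
  unfolding hs_def mtrace_def using assms
  by (auto simp del: index_mult_mat(1) simp: mult_index[of _ d d _ d] intro!: sum.cong)

lemma mtrace_comm: fixes A B :: "complex mat" assumes "A \<in> carrier_mat d d" "B \<in> carrier_mat d d"
  shows "mtrace (A * B) = mtrace (B * A)"
proof -
  have "mtrace (A * B) = (\<Sum>i<d. \<Sum>k<d. A $$ (i,k) * B $$ (k,i))"
    unfolding mtrace_def using assms by (auto simp del: index_mult_mat(1) simp: mult_index[of _ d d _ d] intro!: sum.cong)
  also have "\<dots> = (\<Sum>k<d. \<Sum>i<d. B $$ (k,i) * A $$ (i,k))"
    by (subst sum.swap) (simp add: mult.commute)
  also have "\<dots> = mtrace (B * A)"
    unfolding mtrace_def using assms by (auto simp del: index_mult_mat(1) simp: mult_index[of _ d d _ d] intro!: sum.cong)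
  finally show ?thesis .
qed

lemma hs_smult_right: "A \<in> carrier_mat d d \<Longrightarrow> B \<in> carrier_mat d d \<Longrightarrow> hs A (c \<cdot>\<^sub>m B) = c * hs A B"
  by (simp add: hs_expand sum_distrib_left mult.left_commute)

lemma hs_smult_left: "A \<in> carrier_mat d d \<Longrightarrow> B \<in> carrier_mat d d \<Longrightarrow> hs (c \<cdot>\<^sub>m A) B = cnj c * hs A B"
  by (simp add: hs_expand[of "c \<cdot>\<^sub>m A" d B] hs_expand[of A d B] sum_distrib_left mult.assoc)

lemma hs_uminus_left: "A \<in> carrier_mat d d \<Longrightarrow> B \<in> carrier_mat d d \<Longrightarrow> hs (- A) B = - hs A B"
  by (simp add: hs_expand sum_negf)

lemma hs_mat_right: "A \<in> carrier_mat d d \<Longrightarrow>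
  hs A (mat d d f) = (\<Sum>i<d. \<Sum>k<d. cnj (A $$ (k,i)) * f (k,i))"
  by (simp add: hs_expand)


lemma sum_lessThan_double: "(\<Sum>k<2*m. g k) = (\<Sum>k<m. g (2*k) + g (2*k+1))" for g :: "nat \<Rightarrow> 'a::comm_monoid_add"
  by (induction m) (simp_all add: algebra_simps)

lemma bitsum: "(\<Sum>k::nat<2^n. \<Prod>i<n. f i (bit k i)) = (\<Prod>i<n. f i False + f i True)"
  for f :: "nat \<Rightarrow> bool \<Rightarrow> 'a::comm_semiring_1"
proof (induction n arbitrary: f)
  case 0
  then show ?case by simp
next
  case (Suc n)
  have e1: "\<And>k::nat. bit (2*k) 0 = False" "\<And>k::nat. bit (2*k+1) 0 = True" by (simp_all add: bit_0)
  have e2: "\<And>(k::nat) i. bit (2*k) (Suc i) = bit k i" "\<And>(k::nat) i. bit (2*k+1) (Suc i) = bit k i"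
    by (simp_all add: bit_Suc)
  have "(\<Sum>k::nat<2^Suc n. \<Prod>i<Suc n. f i (bit k i))
      = (\<Sum>k::nat<2^n. (\<Prod>i<Suc n. f i (bit (2*k) i)) + (\<Prod>i<Suc n. f i (bit (2*k+1) i)))"
    by (subst power_Suc, rule sum_lessThan_double)
  also have "\<dots> = (\<Sum>k::nat<2^n. f 0 False * (\<Prod>i<n. f (Suc i) (bit k i)) + f 0 True * (\<Prod>i<n. f (Suc i) (bit k i)))"
    by (simp only: prod.lessThan_Suc_shift e1 e2)
  also have "\<dots> = (f 0 False + f 0 True) * (\<Sum>k::nat<2^n. \<Prod>i<n. f (Suc i) (bit k i))"
    by (simp add: algebra_simps sum.distrib sum_distrib_left)
  also have "\<dots> = (f 0 False + f 0 True) * (\<Prod>i<n. f (Suc i) False + f (Suc i) True)"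
    using Suc[of "\<lambda>i. f (Suc i)"] by simp
  also have "\<dots> = (\<Prod>i<Suc n. f i False + f i True)"
    by (simp only: prod.lessThan_Suc_shift)
  finally show ?case .
qed

lemma powsum: "(\<Sum>z\<in>Pow A. \<Prod>i\<in>A. f i (i \<in> z)) = (\<Prod>i\<in>A. f i False + f i True)"
  if "finite A" for f :: "nat \<Rightarrow> bool \<Rightarrow> 'a::comm_semiring_1"
proof -
  have "(\<Prod>i\<in>A. f i False + f i True) = (\<Prod>i\<in>A. f i True + f i False)" by (simp add: add.commute)
  also have "\<dots> = (\<Sum>X\<in>Pow A. (\<Prod>x\<in>X. f x True) * (\<Prod>x\<in>A-X. f x False))"
    by (rule prod_add[OF that])
  also have "\<dots> = (\<Sum>z\<in>Pow A. \<Prod>i\<in>A. f i (i \<in> z))"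
  proof (rule sum.cong)
    fix z assume "z \<in> Pow A"
    then have zA: "z \<subseteq> A" by auto
    have "(\<Prod>i\<in>A. f i (i \<in> z)) = (\<Prod>i\<in>A. if i \<in> z then f i True else f i False)"
      by (rule prod.cong) auto
    also have "\<dots> = (\<Prod>i\<in>A \<inter> {i. i \<in> z}. f i True) * (\<Prod>i\<in>A \<inter> - {i. i \<in> z}. f i False)"
      by (rule prod.If_cases[OF that])
    also have "A \<inter> {i. i \<in> z} = z" using zA by auto
    also have "A \<inter> - {i. i \<in> z} = A - z" by auto
    finally show "(\<Prod>x\<in>z. f x True) * (\<Prod>x\<in>A - z. f x False) = (\<Prod>i\<in>A. f i (i \<in> z))" by simp
  qed simp
  finally show ?thesis ..
qed

lemma prod_2_or_0: "(\<Prod>i<n. if P i then (2::complex) else 0) = (if \<forall>i<n. P i then 2^n else 0)"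
proof (cases "\<forall>i<n. P i")
  case True
  then have "(\<Prod>i<n. if P i then (2::complex) else 0) = (\<Prod>i<n. 2)" by (intro prod.cong) auto
  then show ?thesis using True by simp
next
  case False
  then obtain i where "i < n" "\<not> P i" by auto
  then show ?thesis using False by (auto intro!: prod_zero)
qed

lemma bit_bound: "r < 2^n \<Longrightarrow> bit r i \<Longrightarrow> i < n" for r :: nat
  by (metis bit_take_bit_iff take_bit_nat_eq_self_iff)

lemma bits_eq: "r < 2^n \<Longrightarrow> c < 2^n \<Longrightarrow> (\<forall>i<n. bit r i = bit c i) \<longleftrightarrow> r = c" for r c :: nat
  by (metis bit_bound bit_eq_iff)


section \<open>Pauli matrices\<close>

definition ph1 :: "bool \<Rightarrow> bool \<Rightarrow> bool \<Rightarrow> bool \<Rightarrow> complex" where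
 "ph1 za xa zb xb = (if za \<and> \<not>xa \<and> \<not>zb \<and> xb then \<i>
    else if \<not>za \<and> xa \<and> zb \<and> \<not>xb then -\<i>
    else if za \<and> \<not>xa \<and> zb \<and> xb then -\<i>
    else if za \<and> xa \<and> zb \<and> \<not>xb then \<i>
    else if \<not>za \<and> xa \<and> zb \<and> xb then \<i>
    else if za \<and> xa \<and> \<not>zb \<and> xb then -\<i> else 1)"

lemma sigma1_mult: "sigma1 za xa r False * sigma1 zb xb False c + sigma1 za xa r True * sigma1 zb xb True c
   = ph1 za xa zb xb * sigma1 (za \<noteq> zb) (xa \<noteq> xb) r c"
  by (cases za; cases xa; cases zb; cases xb; cases r; cases c) (simp_all add: sigma1_def ph1_def)

lemma sigma1_trace: "sigma1 z x False False + sigma1 z x True True = (if z \<or> x then 0 else 2)"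
  by (cases z; cases x) (simp_all add: sigma1_def)

lemma sigma1_cnj: "cnj (sigma1 z x c r) = sigma1 z x r c"
  by (cases z; cases x; cases r; cases c) (simp_all add: sigma1_def)

lemma sigma1_Z: "sigma1 z False r c = (if r = c then (if z \<and> r then -1 else 1) else 0)"
  by (cases z; cases r; cases c) (simp_all add: sigma1_def)

lemma ph1_same: "ph1 z x z x = 1" by (cases z; cases x) (simp_all add: ph1_def)
lemma ph1_Z: "ph1 z False z' False = 1" by (cases z; cases z') (simp_all add: ph1_def)

definition pph :: "nat \<Rightarrow> nat set \<times> nat set \<Rightarrow> nat set \<times> nat set \<Rightarrow> complex" where
 "pph n a b = (\<Prod>i<n. ph1 (i \<in> fst a) (i \<in> snd a) (i \<in> fst b) (i \<in> snd b))"

lemma pph_same: "pph n a a = 1" by (simp add: pph_def ph1_same)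
lemma pph_Z: "pph n (z,{}) (z',{}) = 1" by (simp add: pph_def ph1_Z)

lemma pauli_carrier[simp]: "pauli n a \<in> carrier_mat (2^n) (2^n)" by (simp add: pauli_def)
lemma pauli_dim[simp]: "dim_row (pauli n a) = 2^n" "dim_col (pauli n a) = 2^n" by (simp_all add: pauli_def)
lemma pauli_index: "r < 2^n \<Longrightarrow> c < 2^n \<Longrightarrow>
  pauli n a $$ (r,c) = (\<Prod>i<n. sigma1 (i \<in> fst a) (i \<in> snd a) (bit r i) (bit c i))"
  by (simp add: pauli_def)

lemma symd_mem[simp]: "i \<in> symd A B \<longleftrightarrow> (i \<in> A) \<noteq> (i \<in> B)" by (auto simp: symd_def)
lemma padd_simps[simp]: "fst (padd a b) = symd (fst a) (fst b)" "snd (padd a b) = symd (snd a) (snd b)"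
  by (simp_all add: padd_def)

lemma pauli_mult: "pauli n a * pauli n b = pph n a b \<cdot>\<^sub>m pauli n (padd a b)"
proof (rule eq_matI)
  fix r c assume "r < dim_row (pph n a b \<cdot>\<^sub>m pauli n (padd a b))" "c < dim_col (pph n a b \<cdot>\<^sub>m pauli n (padd a b))"
  then have r: "r < 2^n" and c: "c < 2^n" by auto
  have "(pauli n a * pauli n b) $$ (r,c) = (\<Sum>k<2^n. pauli n a $$ (r,k) * pauli n b $$ (k,c))"
    using r c by (simp del: index_mult_mat(1) add: mult_index[of _ "2^n" "2^n" _ "2^n"])
  also have "\<dots> = (\<Sum>k::nat<2^n. \<Prod>i<n. sigma1 (i\<in>fst a) (i\<in>snd a) (bit r i) (bit k i) * sigma1 (i\<in>fst b) (i\<in>snd b) (bit k i) (bit c i))"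
    by (intro sum.cong refl) (simp add: pauli_index r c prod.distrib)
  also have "\<dots> = (\<Prod>i<n. ph1 (i\<in>fst a) (i\<in>snd a) (i\<in>fst b) (i\<in>snd b) * sigma1 ((i\<in>fst a) \<noteq> (i\<in>fst b)) ((i\<in>snd a) \<noteq> (i\<in>snd b)) (bit r i) (bit c i))"
    using bitsum[of "\<lambda>i bk. sigma1 (i\<in>fst a) (i\<in>snd a) (bit r i) bk * sigma1 (i\<in>fst b) (i\<in>snd b) bk (bit c i)" n]
    by (simp add: sigma1_mult)
  also have "\<dots> = (pph n a b \<cdot>\<^sub>m pauli n (padd a b)) $$ (r,c)"
    using r c by (simp add: pauli_index pph_def prod.distrib)
  finally show "(pauli n a * pauli n b) $$ (r,c) = (pph n a b \<cdot>\<^sub>m pauli n (padd a b)) $$ (r,c)" .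
qed auto

lemma mtrace_pauli: "mtrace (pauli n a) = (\<Prod>i<n. if i \<in> fst a \<or> i \<in> snd a then 0 else 2)"
proof -
  have "mtrace (pauli n a) = (\<Sum>k::nat<2^n. \<Prod>i<n. sigma1 (i\<in>fst a) (i\<in>snd a) (bit k i) (bit k i))"
    unfolding mtrace_def by (intro sum.cong) (auto simp: pauli_index)
  also have "\<dots> = (\<Prod>i<n. if i \<in> fst a \<or> i \<in> snd a then 0 else 2)"
    using bitsum[of "\<lambda>i bk. sigma1 (i\<in>fst a) (i\<in>snd a) bk bk" n] by (simp add: sigma1_trace)
  finally show ?thesis .
qed

lemma pidx_iff: "a \<in> pidx n \<longleftrightarrow> fst a \<subseteq> {..<n} \<and> snd a \<subseteq> {..<n}"
  by (cases a) (auto simp: pidx_def bvecs_def)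

lemma padd_pidx: "a \<in> pidx n \<Longrightarrow> b \<in> pidx n \<Longrightarrow> padd a b \<in> pidx n"
  by (auto simp: pidx_iff)

lemma mtrace_pauli2: assumes "a \<in> pidx n"
  shows "mtrace (pauli n a) = (if a = ({},{}) then 2^n else 0)"
proof -
  have "mtrace (pauli n a) = (\<Prod>i<n. if \<not> (i \<in> fst a \<or> i \<in> snd a) then 2 else 0)"
    by (simp add: mtrace_pauli if_not_P cong: if_cong) (intro prod.cong; simp)
  also have "\<dots> = (if \<forall>i<n. \<not> (i \<in> fst a \<or> i \<in> snd a) then 2^n else 0)" by (rule prod_2_or_0)
  also have "(\<forall>i<n. \<not> (i \<in> fst a \<or> i \<in> snd a)) \<longleftrightarrow> a = ({},{})"
    using assms by (cases a) (auto simp: pidx_iff)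
  finally show ?thesis .
qed

lemma cnj_prod': "cnj (\<Prod>i\<in>A. f i) = (\<Prod>i\<in>A. cnj (f i))"
  by (induction A rule: infinite_finite_induct) auto

lemma pauli_adj: "mat_adjoint (pauli n a) = pauli n a"
  by (rule eq_matI) (auto simp: pauli_index cnj_prod' sigma1_cnj)

lemma mtrace_smult: "A \<in> carrier_mat d d \<Longrightarrow> mtrace (c \<cdot>\<^sub>m A) = c * mtrace A"
  by (simp add: mtrace_def sum_distrib_left)

lemma hs_pauli: assumes "a \<in> pidx n" "b \<in> pidx n"
  shows "hs (pauli n a) (pauli n b) = (if a = b then 2^n else 0)"
proof -
  have "hs (pauli n a) (pauli n b) = pph n a b * mtrace (pauli n (padd a b))"
    unfolding hs_def pauli_adj pauli_mult by (rule mtrace_smult[of _ "2^n"]) simp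
  also have "\<dots> = (if a = b then 2^n else 0)"
  proof (cases "a = b")
    case True
    then have "padd a b = ({},{})" by (auto simp: padd_def symd_def)
    then show ?thesis using True padd_pidx[OF assms] by (simp add: mtrace_pauli2 pph_same)
  next
    case False
    then have "padd a b \<noteq> ({},{})" by (cases a; cases b) (auto simp: padd_def symd_def)
    then show ?thesis using False padd_pidx[OF assms] by (simp add: mtrace_pauli2)
  qed
  finally show ?thesis .
qed

lemma pauli_distinct: assumes "a \<in> pidx n" "b \<in> pidx n" "c \<noteq> 0" "c \<cdot>\<^sub>m pauli n a = c' \<cdot>\<^sub>m pauli n b"
  shows "a = b"
proof (rule ccontr)
  assume ne: "a \<noteq> b"
  have "hs (pauli n a) (c \<cdot>\<^sub>m pauli n a) = c * 2^n"
    by (simp add: hs_smult_right[of _ "2^n"] hs_pauli[OF assms(1) assms(1)])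
  moreover have "hs (pauli n a) (c' \<cdot>\<^sub>m pauli n b) = 0"
    using ne by (simp add: hs_smult_right[of _ "2^n"] hs_pauli[OF assms(1) assms(2)])
  ultimately show False using assms(3,4) by simp
qed

lemma Zop_pauli: "Zop n z = pauli n (z, {})"
proof (rule eq_matI)
  fix r c assume "r < dim_row (pauli n (z, {}))" "c < dim_col (pauli n (z, {}))"
  then have r: "r < 2^n" and c: "c < 2^n" by auto
  show "Zop n z $$ (r,c) = pauli n (z, {}) $$ (r,c)"
  proof (cases "r = c")
    case True
    then show ?thesis using r c by (simp add: Zop_def pauli_index sigma1_Z)
  next
    case False
    then obtain i where i: "i < n" "bit r i \<noteq> bit c i" using bits_eq[OF r c] by auto
    have "pauli n (z, {}) $$ (r,c) = 0"
      using r c i by (simp add: pauli_index sigma1_Z, intro bexI[of _ i], auto)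
    then show ?thesis using False r c by (simp add: Zop_def)
  qed
qed (auto simp: Zop_def)


section \<open>Characters and the expansion of E_x\<close>

definition chi :: "nat \<Rightarrow> nat set \<Rightarrow> nat \<Rightarrow> complex" where
  "chi n z x = (\<Prod>i<n. if i \<in> z \<and> bit x i then -1 else 1)"

lemma chi_cnj[simp]: "cnj (chi n z x) = chi n z x"
  unfolding chi_def cnj_prod' by (intro prod.cong) auto

definition msum :: "nat \<Rightarrow> 'i set \<Rightarrow> ('i \<Rightarrow> complex) \<Rightarrow> ('i \<Rightarrow> complex mat) \<Rightarrow> complex mat" where
  "msum d I c M = mat d d (\<lambda>(i,j). \<Sum>k\<in>I. c k * M k $$ (i,j))"

lemma msum_carrier[simp]: "msum d I c M \<in> carrier_mat d d" by (simp add: msum_def)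
lemma msum_dim[simp]: "dim_row (msum d I c M) = d" "dim_col (msum d I c M) = d" by (simp_all add: msum_def)
lemma msum_index: "i < d \<Longrightarrow> j < d \<Longrightarrow> msum d I c M $$ (i,j) = (\<Sum>k\<in>I. c k * M k $$ (i,j))"
  by (simp add: msum_def)

lemma bvecs_finite[simp]: "finite (bvecs n)" by (simp add: bvecs_def)

lemma Eproj_index: "r < d \<Longrightarrow> c < d \<Longrightarrow> Eproj d x $$ (r,c) = (if r = x \<and> c = x then 1 else 0)"
  by (simp add: Eproj_def unitm_def)

lemma Eproj_carrier[simp]: "Eproj d x \<in> carrier_mat d d"
  by (simp add: Eproj_def unitm_def)

lemma Zop_carrier[simp]: "Zop n z \<in> carrier_mat (2^n) (2^n)"
  by (simp add: Zop_pauli)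

lemma chi_mult: "chi n z x * chi n z r = (\<Prod>i<n. if i \<in> z \<and> bit x i \<noteq> bit r i then -1 else 1)"
  unfolding chi_def prod.distrib[symmetric] by (intro prod.cong) auto

lemma Eproj_exp: assumes "x < 2^n"
  shows "Eproj (2^n) x = msum (2^n) (bvecs n) (\<lambda>z. chi n z x / 2^n) (Zop n)"
proof (rule eq_matI)
  fix r c assume "r < dim_row (msum (2^n) (bvecs n) (\<lambda>z. chi n z x / 2^n) (Zop n))"
    "c < dim_col (msum (2^n) (bvecs n) (\<lambda>z. chi n z x / 2^n) (Zop n))"
  then have r: "r < 2^n" and c: "c < 2^n" by auto
  show "Eproj (2^n) x $$ (r,c) = msum (2^n) (bvecs n) (\<lambda>z. chi n z x / 2^n) (Zop n) $$ (r,c)"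
  proof (cases "r = c")
    case False
    then show ?thesis using r c by (simp add: msum_index Eproj_index Zop_def)
  next
    case True
    have "msum (2^n) (bvecs n) (\<lambda>z. chi n z x / 2^n) (Zop n) $$ (r,c)
        = (\<Sum>z\<in>Pow {..<n}. chi n z x * chi n z r) / 2^n"
      using r c True by (simp add: msum_index Zop_def bvecs_def sum_divide_distrib chi_def)
    also have "\<dots> = (\<Prod>i<n. (1::complex) + (if bit x i \<noteq> bit r i then -1 else 1)) / 2^n"
      unfolding chi_mult
      using powsum[of "{..<n}" "\<lambda>i b. if b \<and> bit x i \<noteq> bit r i then (-1::complex) else 1"]
      by simp
    also have "(\<Prod>i<n. (1::complex) + (if bit x i \<noteq> bit r i then -1 else 1)) = (\<Prod>i<n. if bit x i = bit r i then 2 else 0)"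
      by (intro prod.cong) auto
    also have "\<dots> = (if \<forall>i<n. bit x i = bit r i then 2^n else 0)" by (rule prod_2_or_0)
    also have "(\<forall>i<n. bit x i = bit r i) \<longleftrightarrow> x = r" by (rule bits_eq[OF assms r])
    finally show ?thesis using True r c by (auto simp: Eproj_index)
  qed
qed (auto simp: Eproj_def unitm_def)

lemma chi_fourier: assumes "w \<in> bvecs n" "z \<in> bvecs n" "z' \<in> bvecs n"
  shows "(\<Sum>x<2^n. chi n w x * chi n z x * chi n z' x) = (if w = symd z z' then 2^n else 0)"
proof -
  have "(\<Sum>x<2^n. chi n w x * chi n z x * chi n z' x) =
    (\<Sum>x::nat<2^n. \<Prod>i<n. (if i \<in> w \<and> bit x i then -1 else 1) * (if i \<in> z \<and> bit x i then -1 else 1) * (if i \<in> z' \<and> bit x i then -1 else 1))"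
    unfolding chi_def prod.distrib by simp
  also have "\<dots> = (\<Prod>i<n. (1::complex) + (if i \<in> w then -1 else 1) * (if i \<in> z then -1 else 1) * (if i \<in> z' then -1 else 1))"
    using bitsum[of "\<lambda>i b. (if i \<in> w \<and> b then -1 else 1) * (if i \<in> z \<and> b then -1 else 1) * (if i \<in> z' \<and> b then (-1::complex) else 1)" n]
    by simp
  also have "\<dots> = (\<Prod>i<n. if (i \<in> w) = (i \<in> symd z z') then 2 else 0)"
    by (intro prod.cong) auto
  also have "\<dots> = (if \<forall>i<n. (i \<in> w) = (i \<in> symd z z') then 2^n else 0)" by (rule prod_2_or_0)
  also have "(\<forall>i<n. (i \<in> w) = (i \<in> symd z z')) \<longleftrightarrow> w = symd z z'"
  proof
    assume H: "\<forall>i<n. (i \<in> w) = (i \<in> symd z z')"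
    have "\<And>i. (i \<in> w) = (i \<in> symd z z')"
    proof -
      fix i show "(i \<in> w) = (i \<in> symd z z')"
        using H assms unfolding bvecs_def by (cases "i < n") (auto simp del: symd_mem, auto)
    qed
    then show "w = symd z z'" by blast
  qed blast
  finally show ?thesis .
qed


lemma smult_smult': "a \<cdot>\<^sub>m (b \<cdot>\<^sub>m A) = (a * b) \<cdot>\<^sub>m (A :: complex mat)"
  by (rule eq_matI) auto

lemma uminus_smult: "- A = (-1) \<cdot>\<^sub>m (A :: complex mat)"
  by (rule eq_matI) auto

lemma one_smult': "1 \<cdot>\<^sub>m A = (A :: complex mat)"
  by (rule eq_matI) auto

lemma mult_carrier_sq[simp]: "A \<in> carrier_mat d d \<Longrightarrow> B \<in> carrier_mat d d \<Longrightarrow> A * B \<in> carrier_mat d d"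
  by simp

lemma sq_assoc: "A \<in> carrier_mat d d \<Longrightarrow> B \<in> carrier_mat d d \<Longrightarrow> C \<in> carrier_mat d d \<Longrightarrow> A * B * C = A * (B * C)"
  by simp

lemma dsum: "x < (d::nat) \<Longrightarrow> (\<Sum>i<d. \<Sum>k<d. (if k = x \<and> i = x then f k i else 0)) = (f x x :: complex)"
proof -
  assume x: "x < d"
  have "\<And>i. (\<Sum>k<d. (if k = x \<and> i = x then f k i else 0)) = (if i = x then f x x else 0)"
    using x by (case_tac "i = x") simp_all
  then show ?thesis using x by simp
qed

lemma mult_msum_left: assumes "B \<in> carrier_mat d d" "\<forall>k\<in>I. M k \<in> carrier_mat d d"
  shows "B * msum d I c M = msum d I c (\<lambda>k. B * M k)"
proof (rule eq_matI)
  fix i j assume ij: "i < dim_row (msum d I c (\<lambda>k. B * M k))" "j < dim_col (msum d I c (\<lambda>k. B * M k))"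
  then have i: "i < d" and j: "j < d" by auto
  have "(B * msum d I c M) $$ (i,j) = (\<Sum>t<d. B $$ (i,t) * (\<Sum>k\<in>I. c k * M k $$ (t,j)))"
    using i j assms by (simp del: index_mult_mat(1) add: mult_index[of _ d d _ d] msum_index)
  also have "\<dots> = (\<Sum>k\<in>I. c k * (\<Sum>t<d. B $$ (i,t) * M k $$ (t,j)))"
    by (simp add: sum_distrib_left sum.swap[of _ "{..<d}"] mult_ac)
  also have "\<dots> = msum d I c (\<lambda>k. B * M k) $$ (i,j)"
    using i j assms by (simp del: index_mult_mat(1) add: mult_index[of _ d d _ d] msum_index)
  finally show "(B * msum d I c M) $$ (i,j) = msum d I c (\<lambda>k. B * M k) $$ (i,j)" .
qed (use assms in auto)

lemma mult_msum_right: assumes "B \<in> carrier_mat d d" "\<forall>k\<in>I. M k \<in> carrier_mat d d"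
  shows "msum d I c M * B = msum d I c (\<lambda>k. M k * B)"
proof (rule eq_matI)
  fix i j assume ij: "i < dim_row (msum d I c (\<lambda>k. M k * B))" "j < dim_col (msum d I c (\<lambda>k. M k * B))"
  then have i: "i < d" and j: "j < d" by auto
  have "(msum d I c M * B) $$ (i,j) = (\<Sum>t<d. (\<Sum>k\<in>I. c k * M k $$ (i,t)) * B $$ (t,j))"
    using i j assms by (simp del: index_mult_mat(1) add: mult_index[of _ d d _ d] msum_index)
  also have "\<dots> = (\<Sum>k\<in>I. c k * (\<Sum>t<d. M k $$ (i,t) * B $$ (t,j)))"
    by (simp add: sum_distrib_left sum_distrib_right sum.swap[of _ "{..<d}"] mult_ac)
  also have "\<dots> = msum d I c (\<lambda>k. M k * B) $$ (i,j)"
    using i j assms by (simp del: index_mult_mat(1) add: mult_index[of _ d d _ d] msum_index)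
  finally show "(msum d I c M * B) $$ (i,j) = msum d I c (\<lambda>k. M k * B) $$ (i,j)" .
qed (use assms in auto)

lemma hs_msum_right: assumes "A \<in> carrier_mat d d" "\<forall>k\<in>I. M k \<in> carrier_mat d d"
  shows "hs A (msum d I c M) = (\<Sum>k\<in>I. c k * hs A (M k))"
proof -
  have "hs A (msum d I c M) = (\<Sum>i<d. \<Sum>t<d. cnj (A $$ (t,i)) * (\<Sum>k\<in>I. c k * M k $$ (t,i)))"
    using assms by (simp add: hs_expand[of A d] msum_index)
  also have "\<dots> = (\<Sum>k\<in>I. c k * (\<Sum>i<d. \<Sum>t<d. cnj (A $$ (t,i)) * M k $$ (t,i)))"
    by (simp add: sum_distrib_left sum.swap[of _ I] mult_ac)
  also have "\<dots> = (\<Sum>k\<in>I. c k * hs A (M k))"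
    using assms by (intro sum.cong refl) (simp add: hs_expand[of A d])
  finally show ?thesis .
qed

lemma hs_msum_left: assumes "B \<in> carrier_mat d d" "\<forall>k\<in>I. M k \<in> carrier_mat d d"
  shows "hs (msum d I c M) B = (\<Sum>k\<in>I. cnj (c k) * hs (M k) B)"
proof -
  have "hs (msum d I c M) B = (\<Sum>i<d. \<Sum>t<d. (\<Sum>k\<in>I. cnj (c k) * cnj (M k $$ (t,i))) * B $$ (t,i))"
    using assms by (simp add: hs_expand[of _ d B] msum_index)
  also have "\<dots> = (\<Sum>k\<in>I. cnj (c k) * (\<Sum>i<d. \<Sum>t<d. cnj (M k $$ (t,i)) * B $$ (t,i)))"
    by (simp add: sum_distrib_left sum_distrib_right sum.swap[of _ I] mult_ac)
  also have "\<dots> = (\<Sum>k\<in>I. cnj (c k) * hs (M k) B)"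
    using assms by (intro sum.cong refl) (simp add: hs_expand[of _ d B])
  finally show ?thesis .
qed

lemma hs_Eproj: assumes "A \<in> carrier_mat d d" "x < d" shows "hs (Eproj d x) A = A $$ (x,x)"
proof -
  have "hs (Eproj d x) A = (\<Sum>i<d. \<Sum>k<d. (if k = x \<and> i = x then A $$ (k,i) else 0))"
    unfolding hs_expand[OF Eproj_carrier assms(1)] by (intro sum.cong refl) (simp add: Eproj_index)
  also have "\<dots> = A $$ (x,x)" by (rule dsum[OF assms(2)])
  finally show ?thesis .
qed

lemma Mch_diag: assumes "A \<in> carrier_mat (2^n) (2^n)"
  shows "Mch n A = mat (2^n) (2^n) (\<lambda>(i,j). if i = j then A $$ (i,i) else 0)"
proof (rule eq_matI)
  fix i j assume "i < dim_row (mat (2^n) (2^n) (\<lambda>(i,j). if i = j then A $$ (i,i) else 0))"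
    "j < dim_col (mat (2^n) (2^n) (\<lambda>(i,j). if i = j then A $$ (i,i) else 0))"
  then have i: "i < 2^n" and j: "j < 2^n" by auto
  have "Mch n A $$ (i,j) = (\<Sum>x<2^n. hs (Eproj (2^n) x) A * Eproj (2^n) x $$ (i,j))"
    unfolding Mch_def using i j by simp
  also have "\<dots> = (\<Sum>x<2^n. if x = i then (if i = j then A $$ (i,i) else 0) else 0)"
    by (intro sum.cong refl) (use i j assms in \<open>auto simp: hs_Eproj Eproj_index\<close>)
  also have "\<dots> = (if i = j then A $$ (i,i) else 0)" using i by simp
  finally show "Mch n A $$ (i,j) = mat (2^n) (2^n) (\<lambda>(i,j). if i = j then A $$ (i,i) else 0) $$ (i,j)"
    using i j by simp
qed (auto simp: Mch_def)

lemma Mch_carrier[simp]: "Mch n A \<in> carrier_mat (2^n) (2^n)"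
  by (simp add: Mch_def)

lemma Mch_msum: assumes "\<forall>k\<in>I. M k \<in> carrier_mat (2^n) (2^n)"
  shows "Mch n (msum (2^n) I c M) = msum (2^n) I c (\<lambda>k. Mch n (M k))"
  using assms by (intro eq_matI) (auto simp: Mch_diag msum_index sum.neutral)

lemma Mch_smult: "A \<in> carrier_mat (2^n) (2^n) \<Longrightarrow> Mch n (c \<cdot>\<^sub>m A) = c \<cdot>\<^sub>m Mch n A"
  by (intro eq_matI) (auto simp: Mch_diag)

lemma Mch_pauli: assumes "b \<in> pidx n"
  shows "Mch n (pauli n b) = (if snd b = {} then pauli n b else 0\<^sub>m (2^n) (2^n))"
proof (cases "snd b = {}")
  case True
  then have b: "b = (fst b, {})" by (cases b) auto
  show ?thesis
  proof (rule eq_matI)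
    fix i j assume "i < dim_row (if snd b = {} then pauli n b else 0\<^sub>m (2^n) (2^n))"
      "j < dim_col (if snd b = {} then pauli n b else 0\<^sub>m (2^n) (2^n))"
    then have i: "i < 2^n" and j: "j < 2^n" using True by auto
    have "pauli n b $$ (i,j) = Zop n (fst b) $$ (i,j)" by (subst b) (simp add: Zop_pauli)
    then show "Mch n (pauli n b) $$ (i,j) = (if snd b = {} then pauli n b else 0\<^sub>m (2^n) (2^n)) $$ (i,j)"
      using True i j by (auto simp: Mch_diag Zop_def)
  qed (use True in \<open>auto simp: Mch_def\<close>)
next
  case False
  then obtain t where t: "t \<in> snd b" by auto
  then have tn: "t < n" using assms by (auto simp: pidx_iff)
  show ?thesis
  proof (rule eq_matI)
    fix i j assume "i < dim_row (if snd b = {} then pauli n b else 0\<^sub>m (2^n) (2^n))"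
      "j < dim_col (if snd b = {} then pauli n b else 0\<^sub>m (2^n) (2^n))"
    then have i: "i < 2^n" and j: "j < 2^n" using False by auto
    have "pauli n b $$ (i,i) = 0"
      using i t tn by (simp add: pauli_index) (rule bexI[of _ t], auto simp: sigma1_def)
    then show "Mch n (pauli n b) $$ (i,j) = (if snd b = {} then pauli n b else 0\<^sub>m (2^n) (2^n)) $$ (i,j)"
      using False i j by (auto simp: Mch_diag)
  qed (use False in \<open>auto simp: Mch_def\<close>)
qed

lemma unitaryD: assumes "is_unitary d g"
  shows "g \<in> carrier_mat d d" "g * mat_adjoint g = 1\<^sub>m d" "mat_adjoint g * g = 1\<^sub>m d"
  using assms by (auto simp: is_unitary_def)

lemma unitary_conj_cancel: assumes "is_unitary d g" "A \<in> carrier_mat d d"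
  shows "mat_adjoint g * (g * A * mat_adjoint g) * g = A"
proof -
  have g: "g \<in> carrier_mat d d" and u1: "g * mat_adjoint g = 1\<^sub>m d" and u2: "mat_adjoint g * g = 1\<^sub>m d"
    using unitaryD[OF assms(1)] by auto
  have "mat_adjoint g * (g * A * mat_adjoint g) * g = (mat_adjoint g * g) * A * (mat_adjoint g * g)"
    using g assms(2) by (simp add: sq_assoc[of _ d])
  also have "\<dots> = A" using u2 assms(2) by simp
  finally show ?thesis .
qed

lemma unitary_conj_cancel': assumes "is_unitary d g" "A \<in> carrier_mat d d"
  shows "g * (mat_adjoint g * A * g) * mat_adjoint g = A"
proof -
  have g: "g \<in> carrier_mat d d" and u1: "g * mat_adjoint g = 1\<^sub>m d" and u2: "mat_adjoint g * g = 1\<^sub>m d"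
    using unitaryD[OF assms(1)] by auto
  have "g * (mat_adjoint g * A * g) * mat_adjoint g = (g * mat_adjoint g) * A * (g * mat_adjoint g)"
    using g assms(2) by (simp add: sq_assoc[of _ d])
  also have "\<dots> = A" using u1 assms(2) by simp
  finally show ?thesis .
qed

lemma Sop_carrier[simp]: "Sop n G p A \<in> carrier_mat (2^n) (2^n)"
  by (simp add: Sop_def)

lemma Sop_msum: assumes "\<forall>g\<in>G. g \<in> carrier_mat (2^n) (2^n)" "\<forall>k\<in>I. M k \<in> carrier_mat (2^n) (2^n)"
  shows "Sop n G p (msum (2^n) I c M) = msum (2^n) I c (\<lambda>k. Sop n G p (M k))"
proof -
  have eq: "mat_adjoint g * Mch n (g * msum (2^n) I c M * mat_adjoint g) * g
      = msum (2^n) I c (\<lambda>k. mat_adjoint g * Mch n (g * M k * mat_adjoint g) * g)" if g: "g \<in> G" for g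
  proof -
    have gc: "g \<in> carrier_mat (2^n) (2^n)" using assms g by auto
    have "g * msum (2^n) I c M * mat_adjoint g = msum (2^n) I c (\<lambda>k. g * M k * mat_adjoint g)"
      using gc assms(2) by (simp add: mult_msum_left mult_msum_right)
    then show ?thesis
      using gc assms(2) by (simp add: mult_msum_left mult_msum_right Mch_msum)
  qed
  show ?thesis
  proof (rule eq_matI)
    fix i j assume "i < dim_row (msum (2^n) I c (\<lambda>k. Sop n G p (M k)))" "j < dim_col (msum (2^n) I c (\<lambda>k. Sop n G p (M k)))"
    then have i: "i < 2^n" and j: "j < 2^n" by auto
    have "Sop n G p (msum (2^n) I c M) $$ (i,j)
       = (\<Sum>g\<in>G. complex_of_real (p g) * (\<Sum>k\<in>I. c k * (mat_adjoint g * Mch n (g * M k * mat_adjoint g) * g) $$ (i,j)))"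
      using i j by (simp add: Sop_def eq msum_index cong: sum.cong)
    also have "\<dots> = (\<Sum>k\<in>I. c k * (\<Sum>g\<in>G. complex_of_real (p g) * (mat_adjoint g * Mch n (g * M k * mat_adjoint g) * g) $$ (i,j)))"
      by (simp add: sum_distrib_left sum.swap[of _ I] mult_ac)
    also have "\<dots> = msum (2^n) I c (\<lambda>k. Sop n G p (M k)) $$ (i,j)"
      using i j by (simp add: Sop_def msum_index)
    finally show "Sop n G p (msum (2^n) I c M) $$ (i,j) = msum (2^n) I c (\<lambda>k. Sop n G p (M k)) $$ (i,j)" .
  qed (auto simp: Sop_def)
qed


section \<open>Clifford facts\<close>

lemma i_pow_mod: "\<i> ^ k = \<i> ^ (k mod 4)"
proof -
  have "\<i> ^ k = \<i> ^ (4 * (k div 4) + k mod 4)" by simp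
  also have "\<dots> = (\<i> ^ 4) ^ (k div 4) * \<i> ^ (k mod 4)" by (simp only: power_add power_mult)
  also have "\<dots> = \<i> ^ (k mod 4)" by simp
  finally show ?thesis .
qed

lemma i_pow_cases: "\<i> ^ k = 1 \<or> \<i> ^ k = \<i> \<or> \<i> ^ k = -1 \<or> \<i> ^ k = -\<i>"
proof -
  have "k mod 4 < 4" by simp
  then have "k mod 4 = 0 \<or> k mod 4 = 1 \<or> k mod 4 = 2 \<or> k mod 4 = 3" by linarith
  then show ?thesis
    by (subst (1 2 3 4) i_pow_mod) (auto simp: numeral_3_eq_3 numeral_2_eq_2)
qed

lemma pauli_group_finite: "finite (pauli_group n)"
proof -
  have "pauli_group n \<subseteq> (\<lambda>(k,a). (\<i>^k) \<cdot>\<^sub>m pauli n a) ` ({..<4} \<times> pidx n)"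
  proof
    fix Q assume "Q \<in> pauli_group n"
    then obtain k a where Q: "Q = (\<i>^k) \<cdot>\<^sub>m pauli n a" "a \<in> pidx n" by (auto simp: pauli_group_def)
    then have "Q = (\<lambda>(k,a). (\<i>^k) \<cdot>\<^sub>m pauli n a) (k mod 4, a)" by (simp add: i_pow_mod[of k])
    then show "Q \<in> (\<lambda>(k,a). (\<i>^k) \<cdot>\<^sub>m pauli n a) ` ({..<4} \<times> pidx n)" using Q(2) by force
  qed
  moreover have "finite (pidx n)" by (simp add: pidx_def)
  ultimately show ?thesis by (meson finite_SigmaI finite_imageI finite_lessThan finite_subset)
qed

lemma pauli_group_carrier: "Q \<in> pauli_group n \<Longrightarrow> Q \<in> carrier_mat (2^n) (2^n)"
  by (auto simp: pauli_group_def)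

lemma cliffordD: assumes "is_clifford n g"
  shows "is_unitary (2^n) g" "g \<in> carrier_mat (2^n) (2^n)"
    "\<And>a. a \<in> pidx n \<Longrightarrow> g * pauli n a * mat_adjoint g \<in> pauli_group n"
  using assms by (auto simp: is_clifford_def is_unitary_def)

lemma clifford_maps: assumes "is_clifford n g"
  shows "(\<lambda>Q. g * Q * mat_adjoint g) ` pauli_group n = pauli_group n"
proof (rule endo_inj_surj[OF pauli_group_finite])
  have g: "g \<in> carrier_mat (2^n) (2^n)" using cliffordD[OF assms] by auto
  show "(\<lambda>Q. g * Q * mat_adjoint g) ` pauli_group n \<subseteq> pauli_group n"
  proof
    fix R assume "R \<in> (\<lambda>Q. g * Q * mat_adjoint g) ` pauli_group n"
    then obtain k a where R: "R = g * ((\<i>^k) \<cdot>\<^sub>m pauli n a) * mat_adjoint g" and a: "a \<in> pidx n"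
      by (auto simp: pauli_group_def)
    obtain j b where jb: "g * pauli n a * mat_adjoint g = (\<i>^j) \<cdot>\<^sub>m pauli n b" "b \<in> pidx n"
      using cliffordD(3)[OF assms a] by (auto simp: pauli_group_def)
    have "R = (\<i>^k) \<cdot>\<^sub>m (g * pauli n a * mat_adjoint g)"
      unfolding R using g by (simp add: mult_smult_distrib[OF g pauli_carrier] mult_smult_assoc_mat[OF mult_carrier_sq[OF g pauli_carrier] adj_carrier[OF g]])
    also have "\<dots> = (\<i>^(k+j)) \<cdot>\<^sub>m pauli n b" by (simp add: jb smult_smult' power_add)
    finally show "R \<in> pauli_group n" unfolding pauli_group_def using jb(2) by blast
  qed
  show "inj_on (\<lambda>Q. g * Q * mat_adjoint g) (pauli_group n)"
  proof (rule inj_onI)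
    fix Q Q' assume Q: "Q \<in> pauli_group n" and Q': "Q' \<in> pauli_group n"
      and eq: "g * Q * mat_adjoint g = g * Q' * mat_adjoint g"
    have "Q = mat_adjoint g * (g * Q * mat_adjoint g) * g"
      using unitary_conj_cancel[OF cliffordD(1)[OF assms] pauli_group_carrier[OF Q]] by simp
    also have "\<dots> = Q'" unfolding eq
      using unitary_conj_cancel[OF cliffordD(1)[OF assms] pauli_group_carrier[OF Q']] by simp
    finally show "Q = Q'" .
  qed
qed

lemma Zop_adj: "mat_adjoint (Zop n z) = Zop n z"
  by (simp add: Zop_pauli pauli_adj)

lemma conjZ_herm: assumes "g \<in> carrier_mat (2^n) (2^n)"
  shows "mat_adjoint (mat_adjoint g * Zop n z * g) = mat_adjoint g * Zop n z * g"
  using assms by (simp add: adj_mult[of _ "2^n" "2^n" _ "2^n"] Zop_adj sq_assoc[of _ "2^n"])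

lemma clifford_Z: assumes "is_clifford n g" "z \<in> bvecs n"
  shows "\<exists>b s. b \<in> pidx n \<and> (s = 1 \<or> s = -1) \<and> mat_adjoint g * Zop n z * g = s \<cdot>\<^sub>m pauli n b"
proof -
  have g: "g \<in> carrier_mat (2^n) (2^n)" using cliffordD[OF assms(1)] by auto
  have "Zop n z = (\<i>^0) \<cdot>\<^sub>m pauli n (z, {})" by (simp add: Zop_pauli one_smult')
  moreover have "(z, {}) \<in> pidx n" using assms(2) by (simp add: pidx_def bvecs_def)
  ultimately have "Zop n z \<in> pauli_group n" unfolding pauli_group_def
    by (intro CollectI exI[of _ 0] exI[of _ "(z, {})"] conjI)
  then have "Zop n z \<in> (\<lambda>Q. g * Q * mat_adjoint g) ` pauli_group n"
    using clifford_maps[OF assms(1)] by simp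
  then obtain Q where Q0: "Zop n z = g * Q * mat_adjoint g" "Q \<in> pauli_group n"
    by (rule imageE)
  then have Q: "Q \<in> pauli_group n" "g * Q * mat_adjoint g = Zop n z" by simp_all
  then obtain k b where kb: "Q = (\<i>^k) \<cdot>\<^sub>m pauli n b" "b \<in> pidx n" by (auto simp: pauli_group_def)
  have conj: "mat_adjoint g * Zop n z * g = Q"
    using unitary_conj_cancel[OF cliffordD(1)[OF assms(1)] pauli_group_carrier[OF Q(1)]] Q(2) by simp
  have "cnj (\<i>^k) \<cdot>\<^sub>m pauli n b = mat_adjoint Q" by (simp add: kb adj_smult pauli_adj)
  also have "\<dots> = Q" using conjZ_herm[OF g, of z] conj by simp
  finally have eq: "cnj (\<i>^k) \<cdot>\<^sub>m pauli n b = (\<i>^k) \<cdot>\<^sub>m pauli n b" using kb by simp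
  have "cnj (\<i>^k) * 2^n = (\<i>^k) * 2^n"
    using arg_cong[OF eq, of "hs (pauli n b)"] kb(2)
    by (simp add: hs_smult_right[of _ "2^n"] hs_pauli)
  then have cc: "cnj (\<i>^k) = \<i>^k" by simp
  have n1: "\<i>^k \<noteq> \<i>"
  proof
    assume h: "\<i>^k = \<i>"
    then have "cnj (\<i>^k) = - \<i>" by simp
    with cc h show False by simp
  qed
  have n2: "\<i>^k \<noteq> - \<i>"
  proof
    assume h: "\<i>^k = - \<i>"
    then have "cnj (\<i>^k) = \<i>" by simp
    with cc h show False by simp
  qed
  have "\<i>^k = 1 \<or> \<i>^k = -1" using i_pow_cases[of k] n1 n2 by blast
  then show ?thesis using conj kb by blast
qed

definition eps :: "nat \<Rightarrow> complex mat \<Rightarrow> nat set \<Rightarrow> complex" where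
  "eps n g z = (if mat_adjoint g * Zop n z * g = pauli n (Xi n g z) then 1 else -1)"

lemma Xi_props: assumes "is_clifford n g" "z \<in> bvecs n"
  shows "Xi n g z \<in> pidx n" "mat_adjoint g * Zop n z * g = eps n g z \<cdot>\<^sub>m pauli n (Xi n g z)"
    "eps n g z = 1 \<or> eps n g z = -1"
proof -
  obtain b s where bs: "b \<in> pidx n" "s = 1 \<or> s = -1" "mat_adjoint g * Zop n z * g = s \<cdot>\<^sub>m pauli n b"
    using clifford_Z[OF assms] by blast
  let ?C = "mat_adjoint g * Zop n z * g"
  have P: "b \<in> pidx n \<and> (?C = pauli n b \<or> ?C = - pauli n b)"
    using bs by (auto simp: one_smult' uminus_smult)
  have U: "b' = b" if "b' \<in> pidx n \<and> (?C = pauli n b' \<or> ?C = - pauli n b')" for b'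
  proof -
    have "?C = 1 \<cdot>\<^sub>m pauli n b' \<or> ?C = (-1) \<cdot>\<^sub>m pauli n b'"
      using that one_smult'[of "pauli n b'"] uminus_smult[of "pauli n b'"] by metis
    then obtain s' where s': "s' = 1 \<or> s' = -1" "?C = s' \<cdot>\<^sub>m pauli n b'" by blast
    have "s' \<cdot>\<^sub>m pauli n b' = s \<cdot>\<^sub>m pauli n b" using s' bs by simp
    then show "b' = b" using pauli_distinct[of b' n b s' s] that bs(1) s'(1) by auto
  qed
  have X: "Xi n g z = b" unfolding Xi_def using P U by (rule the_equality)
  show "Xi n g z \<in> pidx n" using X bs by simp
  show "?C = eps n g z \<cdot>\<^sub>m pauli n (Xi n g z)"
    using P X by (auto simp: eps_def one_smult' uminus_smult)
  show "eps n g z = 1 \<or> eps n g z = -1" by (simp add: eps_def)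
qed


section \<open>S on Paulis and its inverse\<close>

lemma bvecs_pidx: "z \<in> bvecs n \<Longrightarrow> (z, {}) \<in> pidx n"
  by (simp add: pidx_def bvecs_def)

lemma eps_nz: "is_clifford n g \<Longrightarrow> z \<in> bvecs n \<Longrightarrow> eps n g z \<noteq> 0"
  using Xi_props(3) by fastforce

lemma eps_sq: "is_clifford n g \<Longrightarrow> z \<in> bvecs n \<Longrightarrow> eps n g z * eps n g z = 1"
  using Xi_props(3) by fastforce

lemma eps_cnj: "is_clifford n g \<Longrightarrow> z \<in> bvecs n \<Longrightarrow> cnj (eps n g z) = eps n g z"
  using Xi_props(3) by fastforce

lemma XiZ_conj: assumes "is_clifford n g" "z \<in> bvecs n"
  shows "g * pauli n (Xi n g z) * mat_adjoint g = eps n g z \<cdot>\<^sub>m Zop n z"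
proof -
  have U: "is_unitary (2^n) g" and g: "g \<in> carrier_mat (2^n) (2^n)" using cliffordD[OF assms(1)] by auto
  let ?P = "pauli n (Xi n g z)"
  have "Zop n z = g * (mat_adjoint g * Zop n z * g) * mat_adjoint g"
    using unitary_conj_cancel'[OF U Zop_carrier] by simp
  also have "\<dots> = g * (eps n g z \<cdot>\<^sub>m ?P) * mat_adjoint g" using Xi_props(2)[OF assms] by simp
  also have "\<dots> = eps n g z \<cdot>\<^sub>m (g * ?P * mat_adjoint g)"
    using g by (simp add: mult_smult_distrib[OF g pauli_carrier] mult_smult_assoc_mat[OF mult_carrier_sq[OF g pauli_carrier] adj_carrier[OF g]])
  finally have "eps n g z \<cdot>\<^sub>m Zop n z = (eps n g z * eps n g z) \<cdot>\<^sub>m (g * ?P * mat_adjoint g)"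
    by (simp add: smult_smult')
  then show ?thesis using eps_sq[OF assms] by (simp add: one_smult')
qed

lemma per_g: assumes "is_clifford n g" "a \<in> pidx n"
  shows "mat_adjoint g * Mch n (g * pauli n a * mat_adjoint g) * g
       = of_nat (card {z \<in> bvecs n. Xi n g z = a}) \<cdot>\<^sub>m pauli n a"
proof -
  have U: "is_unitary (2^n) g" and g: "g \<in> carrier_mat (2^n) (2^n)" using cliffordD[OF assms(1)] by auto
  obtain k b where kb: "g * pauli n a * mat_adjoint g = (\<i>^k) \<cdot>\<^sub>m pauli n b" "b \<in> pidx n"
    using cliffordD(3)[OF assms] by (auto simp: pauli_group_def)
  have "mat_adjoint g * (g * pauli n a * mat_adjoint g) * g = pauli n a"
    by (rule unitary_conj_cancel[OF U pauli_carrier])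
  then have Pa: "pauli n a = mat_adjoint g * ((\<i>^k) \<cdot>\<^sub>m pauli n b) * g"
    unfolding kb(1) by (rule sym)
  have zb: "(z, {}) = b" if z: "z \<in> bvecs n" "Xi n g z = a" for z
  proof -
    have "eps n g z \<cdot>\<^sub>m pauli n (z, {}) = (\<i>^k) \<cdot>\<^sub>m pauli n b"
      using XiZ_conj[OF assms(1) z(1)] z(2) kb(1) by (simp add: Zop_pauli)
    then show ?thesis using pauli_distinct[OF bvecs_pidx[OF z(1)] kb(2) eps_nz[OF assms(1) z(1)]] by simp
  qed
  have Mch_eq: "Mch n (g * pauli n a * mat_adjoint g) = (\<i>^k) \<cdot>\<^sub>m Mch n (pauli n b)"
    by (simp add: kb(1) Mch_smult)
  show ?thesis
  proof (cases "snd b = {}")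
    case True
    then have b: "b = (fst b, {})" by (cases b) auto
    have fb: "fst b \<in> bvecs n" using kb(2) by (auto simp: pidx_def)
    have Zb: "pauli n b = Zop n (fst b)" by (subst b) (simp add: Zop_pauli)
    have "pauli n a = (\<i>^k) \<cdot>\<^sub>m (mat_adjoint g * Zop n (fst b) * g)"
      unfolding Pa Zb using g
      by (simp add: mult_smult_distrib[OF adj_carrier[OF g] Zop_carrier] mult_smult_assoc_mat[OF mult_carrier_sq[OF adj_carrier[OF g] Zop_carrier] g])
    also have "\<dots> = (\<i>^k * eps n g (fst b)) \<cdot>\<^sub>m pauli n (Xi n g (fst b))"
      by (simp add: Xi_props(2)[OF assms(1) fb] smult_smult')
    finally have "1 \<cdot>\<^sub>m pauli n a = (\<i>^k * eps n g (fst b)) \<cdot>\<^sub>m pauli n (Xi n g (fst b))"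
      by (simp add: one_smult')
    then have Xa: "Xi n g (fst b) = a"
      using pauli_distinct[OF assms(2) Xi_props(1)[OF assms(1) fb], of 1] by simp
    have zf: "\<And>z. z \<in> bvecs n \<Longrightarrow> Xi n g z = a \<Longrightarrow> z = fst b"
      using zb by (metis fst_conv)
    have "{z \<in> bvecs n. Xi n g z = a} = {fst b}"
      using zf fb Xa by blast
    then have card1: "card {z \<in> bvecs n. Xi n g z = a} = 1" by simp
    have "mat_adjoint g * Mch n (g * pauli n a * mat_adjoint g) * g = mat_adjoint g * ((\<i>^k) \<cdot>\<^sub>m pauli n b) * g"
      by (simp only: Mch_eq Mch_pauli[OF kb(2)] True, simp)
    also have "\<dots> = pauli n a" by (rule Pa[symmetric])
    finally have "mat_adjoint g * Mch n (g * pauli n a * mat_adjoint g) * g = pauli n a" .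
    then show ?thesis using card1 by (simp add: one_smult')
  next
    case False
    have zf: "\<And>z. z \<in> bvecs n \<Longrightarrow> Xi n g z = a \<Longrightarrow> False"
      using zb False by (metis snd_conv)
    have "{z \<in> bvecs n. Xi n g z = a} = {}"
      using zf by blast
    then have card0: "card {z \<in> bvecs n. Xi n g z = a} = 0" by simp
    have "mat_adjoint g * Mch n (g * pauli n a * mat_adjoint g) * g = mat_adjoint g * ((\<i>^k) \<cdot>\<^sub>m 0\<^sub>m (2^n) (2^n)) * g"
      using False by (simp only: Mch_eq Mch_pauli[OF kb(2)] if_False)
    also have "\<dots> = 0\<^sub>m (2^n) (2^n)" using g by simp
    finally have "mat_adjoint g * Mch n (g * pauli n a * mat_adjoint g) * g = 0\<^sub>m (2^n) (2^n)" .
    moreover have "0 \<cdot>\<^sub>m pauli n a = 0\<^sub>m (2^n) (2^n)" by (rule eq_matI) auto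
    ultimately show ?thesis unfolding card0 of_nat_0 by simp
  qed
qed

lemma sum_filter_swap: fixes f :: "'a \<Rightarrow> 'c::comm_semiring_1"
  assumes "finite A" "finite B"
  shows "(\<Sum>z\<in>A. \<Sum>g\<in>{g\<in>B. P g z}. f g) = (\<Sum>g\<in>B. f g * of_nat (card {z\<in>A. P g z}))"
proof -
  have "(\<Sum>z\<in>A. \<Sum>g\<in>{g\<in>B. P g z}. f g) = (\<Sum>z\<in>A. \<Sum>g\<in>B. if P g z then f g else 0)"
    using assms by (simp add: sum.inter_filter)
  also have "\<dots> = (\<Sum>g\<in>B. \<Sum>z\<in>A. if P g z then f g else 0)" by (rule sum.swap)
  also have "\<dots> = (\<Sum>g\<in>B. f g * of_nat (card {z\<in>A. P g z}))"
  proof (rule sum.cong)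
    fix g assume "g \<in> B"
    have "(\<Sum>z\<in>A. if P g z then f g else 0) = (\<Sum>z\<in>{z\<in>A. P g z}. f g)"
      by (rule sum.inter_filter[symmetric, OF assms(1)])
    then show "(\<Sum>z\<in>A. if P g z then f g else 0) = f g * of_nat (card {z\<in>A. P g z})"
      by (simp add: mult.commute)
  qed simp
  finally show ?thesis .
qed

lemma s1_alt: "finite G \<Longrightarrow> s1 n G p a = (\<Sum>g\<in>G. p g * real (card {z\<in>bvecs n. Xi n g z = a}))"
  unfolding s1_def by (rule sum_filter_swap) simp_all

lemma Sop_pauli: assumes "finite G" "\<forall>g\<in>G. is_clifford n g" "a \<in> pidx n"
  shows "Sop n G p (pauli n a) = complex_of_real (s1 n G p a) \<cdot>\<^sub>m pauli n a"
proof (rule eq_matI)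
  fix i j assume "i < dim_row (complex_of_real (s1 n G p a) \<cdot>\<^sub>m pauli n a)"
    "j < dim_col (complex_of_real (s1 n G p a) \<cdot>\<^sub>m pauli n a)"
  then have i: "i < 2^n" and j: "j < 2^n" by auto
  have "Sop n G p (pauli n a) $$ (i,j) = (\<Sum>g\<in>G. complex_of_real (p g) * (of_nat (card {z \<in> bvecs n. Xi n g z = a}) * pauli n a $$ (i,j)))"
    unfolding Sop_def using i j assms by (simp add: per_g cong: sum.cong)
  also have "\<dots> = complex_of_real (s1 n G p a) * pauli n a $$ (i,j)"
    by (simp add: s1_alt[OF assms(1)] sum_distrib_left mult_ac)
  finally show "Sop n G p (pauli n a) $$ (i,j) = (complex_of_real (s1 n G p a) \<cdot>\<^sub>m pauli n a) $$ (i,j)"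
    using i j by simp
qed (auto simp: Sop_def)

lemma msum_empty: "msum d {} c M = 0\<^sub>m d d"
  by (rule eq_matI) (auto simp: msum_def)

lemma Sop_zero: assumes "\<forall>g\<in>G. g \<in> carrier_mat (2^n) (2^n)"
  shows "Sop n G p (0\<^sub>m (2^n) (2^n)) = 0\<^sub>m (2^n) (2^n)"
  using Sop_msum[OF assms, of "{}" "\<lambda>_. 0\<^sub>m (2^n) (2^n)" p "\<lambda>_. 0"] by (simp add: msum_empty)

lemma s1_nz: assumes "finite G" "\<forall>g\<in>G. is_clifford n g" "a \<in> pidx n"
  and bij: "bij_betw (Sop n G p) (carrier_mat (2^n) (2^n)) (carrier_mat (2^n) (2^n))"
  shows "s1 n G p a \<noteq> 0"
proof
  assume s0: "s1 n G p a = 0"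
  have gc: "\<forall>g\<in>G. g \<in> carrier_mat (2^n) (2^n)" using assms(2) cliffordD by blast
  have z0: "0 \<cdot>\<^sub>m pauli n a = 0\<^sub>m (2^n) (2^n)" by (rule eq_matI) auto
  have "Sop n G p (pauli n a) = Sop n G p (0\<^sub>m (2^n) (2^n))"
    using Sop_pauli[OF assms(1-3)] s0 Sop_zero[OF gc] z0 by simp
  then have "pauli n a = 0\<^sub>m (2^n) (2^n)"
    using bij_betw_imp_inj_on[OF bij] by (simp add: inj_on_def)
  then have "hs (pauli n a) (pauli n a) = 0" by (simp add: hs_expand[of _ "2^n"])
  then show False using hs_pauli[OF assms(3) assms(3)] by simp
qed

lemma Sinv_Sop: assumes bij: "bij_betw (Sop n G p) (carrier_mat (2^n) (2^n)) (carrier_mat (2^n) (2^n))"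
  and X: "X \<in> carrier_mat (2^n) (2^n)"
  shows "Sinv n G p (Sop n G p X) = X"
  unfolding Sinv_def by (rule the_inv_into_f_f[OF bij_betw_imp_inj_on[OF bij] X])

lemma msum_smult: assumes "\<forall>k\<in>I. M k \<in> carrier_mat d d"
  shows "msum d I c (\<lambda>k. a k \<cdot>\<^sub>m M k) = msum d I (\<lambda>k. c k * a k) M"
  using assms by (intro eq_matI) (auto simp: msum_index mult_ac intro!: sum.cong)

lemma msum_cong: "(\<And>k. k \<in> I \<Longrightarrow> c k = c' k) \<Longrightarrow> msum d I c M = msum d I c' M"
  by (auto simp: msum_def intro!: sum.cong)

lemma msum_cong2: "(\<And>k. k \<in> I \<Longrightarrow> M k = M' k) \<Longrightarrow> msum d I c M = msum d I c M'"
  by (auto simp: msum_def intro!: sum.cong)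

lemma conjE_exp: assumes "is_clifford n g" "x < 2^n"
  shows "mat_adjoint g * Eproj (2^n) x * g
    = msum (2^n) (bvecs n) (\<lambda>z. chi n z x / 2^n * eps n g z) (\<lambda>z. pauli n (Xi n g z))"
proof -
  have g: "g \<in> carrier_mat (2^n) (2^n)" using cliffordD[OF assms(1)] by auto
  have "mat_adjoint g * Eproj (2^n) x = msum (2^n) (bvecs n) (\<lambda>z. chi n z x / 2^n) (\<lambda>z. mat_adjoint g * Zop n z)"
    unfolding Eproj_exp[OF assms(2)] by (rule mult_msum_left) (use g in auto)
  then have "mat_adjoint g * Eproj (2^n) x * g
      = msum (2^n) (bvecs n) (\<lambda>z. chi n z x / 2^n) (\<lambda>z. mat_adjoint g * Zop n z) * g" by simp
  also have "\<dots> = msum (2^n) (bvecs n) (\<lambda>z. chi n z x / 2^n) (\<lambda>z. mat_adjoint g * Zop n z * g)"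
    by (rule mult_msum_right) (use g in auto)
  also have "\<dots> = msum (2^n) (bvecs n) (\<lambda>z. chi n z x / 2^n) (\<lambda>z. eps n g z \<cdot>\<^sub>m pauli n (Xi n g z))"
    by (intro msum_cong2) (simp add: Xi_props(2)[OF assms(1)])
  also have "\<dots> = msum (2^n) (bvecs n) (\<lambda>z. chi n z x / 2^n * eps n g z) (\<lambda>z. pauli n (Xi n g z))"
    by (rule msum_smult) simp
  finally show ?thesis .
qed

lemma Sinv_conjE: assumes "finite G" "\<forall>g\<in>G. is_clifford n g"
  and bij: "bij_betw (Sop n G p) (carrier_mat (2^n) (2^n)) (carrier_mat (2^n) (2^n))"
  and g: "g \<in> G" and x: "x < 2^n"
  shows "Sinv n G p (mat_adjoint g * Eproj (2^n) x * g)
    = msum (2^n) (bvecs n) (\<lambda>z. chi n z x / 2^n * eps n g z / complex_of_real (s1 n G p (Xi n g z))) (\<lambda>z. pauli n (Xi n g z))"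
proof -
  have cg: "is_clifford n g" using assms by auto
  have gc: "\<forall>g\<in>G. g \<in> carrier_mat (2^n) (2^n)" using assms(2) cliffordD by blast
  let ?Y = "msum (2^n) (bvecs n) (\<lambda>z. chi n z x / 2^n * eps n g z / complex_of_real (s1 n G p (Xi n g z))) (\<lambda>z. pauli n (Xi n g z))"
  have "Sop n G p ?Y = msum (2^n) (bvecs n) (\<lambda>z. chi n z x / 2^n * eps n g z / complex_of_real (s1 n G p (Xi n g z)))
      (\<lambda>z. complex_of_real (s1 n G p (Xi n g z)) \<cdot>\<^sub>m pauli n (Xi n g z))"
  proof -
    have "Sop n G p ?Y = msum (2^n) (bvecs n) (\<lambda>z. chi n z x / 2^n * eps n g z / complex_of_real (s1 n G p (Xi n g z)))
      (\<lambda>z. Sop n G p (pauli n (Xi n g z)))" by (rule Sop_msum[OF gc]) simp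
    also have "\<dots> = msum (2^n) (bvecs n) (\<lambda>z. chi n z x / 2^n * eps n g z / complex_of_real (s1 n G p (Xi n g z)))
      (\<lambda>z. complex_of_real (s1 n G p (Xi n g z)) \<cdot>\<^sub>m pauli n (Xi n g z))"
      by (rule msum_cong2) (rule Sop_pauli[OF assms(1,2) Xi_props(1)[OF cg]])
    finally show ?thesis .
  qed
  also have "\<dots> = msum (2^n) (bvecs n) (\<lambda>z. chi n z x / 2^n * eps n g z / complex_of_real (s1 n G p (Xi n g z))
      * complex_of_real (s1 n G p (Xi n g z))) (\<lambda>z. pauli n (Xi n g z))"
    by (rule msum_smult) simp
  also have "\<dots> = msum (2^n) (bvecs n) (\<lambda>z. chi n z x / 2^n * eps n g z) (\<lambda>z. pauli n (Xi n g z))"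
    by (rule msum_cong) (use s1_nz[OF assms(1,2) Xi_props(1)[OF cg] bij] in simp)
  also have "\<dots> = mat_adjoint g * Eproj (2^n) x * g" using conjE_exp[OF cg x] by simp
  finally have S_eq: "Sop n G p ?Y = mat_adjoint g * Eproj (2^n) x * g" .
  have Y: "Sinv n G p (Sop n G p ?Y) = ?Y" by (rule Sinv_Sop[OF bij msum_carrier])
  show ?thesis using Y[unfolded S_eq] .
qed


lemma ohat_formula: assumes "finite G" "\<forall>g\<in>G. is_clifford n g"
  and bij: "bij_betw (Sop n G p) (carrier_mat (2^n) (2^n)) (carrier_mat (2^n) (2^n))"
  and g: "g \<in> G" and x: "x < 2^n" and O: "Obs \<in> carrier_mat (2^n) (2^n)"
  shows "ohat n G p Obs g x = (\<Sum>z\<in>bvecs n. chi n z x / 2^n * eps n g z / complex_of_real (s1 n G p (Xi n g z)) * hs Obs (pauli n (Xi n g z)))"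
  unfolding ohat_def Sinv_conjE[OF assms(1-5)] by (rule hs_msum_right[OF O]) simp

lemma hs_conj_move: assumes g: "g \<in> carrier_mat (2^n) (2^n)" and L: "L \<in> carrier_mat (2^n) (2^n)"
  shows "hs (Zop n z) (g * L * mat_adjoint g) = hs (mat_adjoint g * Zop n z * g) L"
proof -
  have Z: "Zop n z \<in> carrier_mat (2^n) (2^n)" by simp
  have ag: "mat_adjoint g \<in> carrier_mat (2^n) (2^n)" using g by simp
  have "hs (Zop n z) (g * L * mat_adjoint g) = mtrace (Zop n z * (g * L * mat_adjoint g))"
    by (simp add: hs_def Zop_adj)
  also have "Zop n z * (g * L * mat_adjoint g) = (Zop n z * g * L) * mat_adjoint g"
    using g L Z by (simp add: sq_assoc[of _ "2^n"])
  also have "mtrace \<dots> = mtrace (mat_adjoint g * (Zop n z * g * L))"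
    by (rule mtrace_comm[of _ "2^n"]) (use g L Z ag in simp_all)
  also have "mat_adjoint g * (Zop n z * g * L) = mat_adjoint g * Zop n z * g * L"
    using g L Z ag by (simp add: sq_assoc[of _ "2^n"])
  also have "mtrace \<dots> = hs (mat_adjoint g * Zop n z * g) L"
    by (simp add: hs_def conjZ_herm[OF g])
  finally show ?thesis .
qed

lemma outprob_formula: assumes cg: "is_clifford n g" and x: "x < 2^n"
  and L: "\<Lambda> g \<rho> \<in> carrier_mat (2^n) (2^n)"
  shows "outprob \<Lambda> \<rho> g x = (\<Sum>z\<in>bvecs n. chi n z x / 2^n * eps n g z * hs (pauli n (Xi n g z)) (\<Lambda> g \<rho>))"
proof -
  have g: "g \<in> carrier_mat (2^n) (2^n)" using cliffordD[OF cg] by auto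
  let ?L = "\<Lambda> g \<rho>"
  have gl: "g * ?L * mat_adjoint g \<in> carrier_mat (2^n) (2^n)" using g L by simp
  have "outprob \<Lambda> \<rho> g x = hs (Eproj (2^n) x) (g * ?L * mat_adjoint g)"
    unfolding outprob_def by (rule hs_Eproj[OF gl x, symmetric])
  also have "\<dots> = (\<Sum>z\<in>bvecs n. cnj (chi n z x / 2^n) * hs (Zop n z) (g * ?L * mat_adjoint g))"
    unfolding Eproj_exp[OF x] by (rule hs_msum_left[OF gl]) simp
  also have "\<dots> = (\<Sum>z\<in>bvecs n. chi n z x / 2^n * eps n g z * hs (pauli n (Xi n g z)) ?L)"
  proof (rule sum.cong)
    fix z assume z: "z \<in> bvecs n"
    have "hs (Zop n z) (g * ?L * mat_adjoint g) = hs (eps n g z \<cdot>\<^sub>m pauli n (Xi n g z)) ?L"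
      using hs_conj_move[OF g L] Xi_props(2)[OF cg z] by simp
    also have "\<dots> = eps n g z * hs (pauli n (Xi n g z)) ?L"
      using hs_smult_left[OF pauli_carrier L] eps_cnj[OF cg z] by simp
    finally show "cnj (chi n z x / 2^n) * hs (Zop n z) (g * ?L * mat_adjoint g)
      = chi n z x / 2^n * eps n g z * hs (pauli n (Xi n g z)) ?L"
      by simp
  qed simp
  finally show ?thesis .
qed

lemma smult_pauli_inj: assumes "a \<in> pidx n" "c \<cdot>\<^sub>m pauli n a = c' \<cdot>\<^sub>m pauli n a"
  shows "c = c'"
proof -
  have "c * 2^n = c' * 2^n"
    using arg_cong[OF assms(2), of "hs (pauli n a)"] assms(1)
    by (simp add: hs_smult_right[of _ "2^n"] hs_pauli)
  then show ?thesis by simp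
qed

lemma ph1_nz: "ph1 za xa zb xb \<noteq> 0" by (simp add: ph1_def)
lemma pph_nz: "pph n a b \<noteq> 0" by (simp add: pph_def ph1_nz)

lemma Zop_mult: "Zop n z * Zop n z' = Zop n (symd z z')"
proof -
  have "padd (z, {}) (z', {}) = (symd z z', {})" by (simp add: padd_def symd_def)
  then show ?thesis by (simp add: Zop_pauli pauli_mult pph_Z one_smult')
qed

lemma conj_mult: assumes U: "is_unitary (2^n) g" and A: "A \<in> carrier_mat (2^n) (2^n)" and B: "B \<in> carrier_mat (2^n) (2^n)"
  shows "(mat_adjoint g * A * g) * (mat_adjoint g * B * g) = mat_adjoint g * (A * B) * g"
proof -
  have g: "g \<in> carrier_mat (2^n) (2^n)" and u1: "g * mat_adjoint g = 1\<^sub>m (2^n)" using unitaryD[OF U] by auto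
  have ag: "mat_adjoint g \<in> carrier_mat (2^n) (2^n)" using g by simp
  have "(mat_adjoint g * A * g) * (mat_adjoint g * B * g) = mat_adjoint g * A * (g * mat_adjoint g) * B * g"
    using g ag A B by (simp add: sq_assoc[of _ "2^n"])
  also have "\<dots> = mat_adjoint g * (A * B) * g"
    using g ag A B u1 by (simp add: sq_assoc[of _ "2^n"])
  finally show ?thesis .
qed

lemma sign_core: assumes cg: "is_clifford n g" and z: "z \<in> bvecs n" and z': "z' \<in> bvecs n"
  shows "Xi n g (symd z z') = padd (Xi n g z) (Xi n g z')"
    "pph n (Xi n g z) (Xi n g z') = eps n g z * eps n g z' * eps n g (symd z z')"
proof -
  have U: "is_unitary (2^n) g" using cliffordD[OF cg] by auto
  have zz: "symd z z' \<in> bvecs n" using z z' by (auto simp: bvecs_def symd_def)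
  let ?a = "Xi n g z" and ?b = "Xi n g z'" and ?c = "Xi n g (symd z z')"
  let ?e = "eps n g z" and ?e' = "eps n g z'" and ?e'' = "eps n g (symd z z')"
  have a: "?a \<in> pidx n" and b: "?b \<in> pidx n" and c: "?c \<in> pidx n"
    using Xi_props(1)[OF cg] z z' zz by auto
  have "(?e * ?e' * pph n ?a ?b) \<cdot>\<^sub>m pauli n (padd ?a ?b) = (?e \<cdot>\<^sub>m pauli n ?a) * (?e' \<cdot>\<^sub>m pauli n ?b)"
    by (simp add: mult_smult_distrib[OF smult_carrier_mat[OF pauli_carrier] pauli_carrier]
        mult_smult_assoc_mat[OF pauli_carrier pauli_carrier] pauli_mult smult_smult' mult_ac)
  also have "\<dots> = (mat_adjoint g * Zop n z * g) * (mat_adjoint g * Zop n z' * g)"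
    using Xi_props(2)[OF cg z] Xi_props(2)[OF cg z'] by simp
  also have "\<dots> = mat_adjoint g * Zop n (symd z z') * g"
    by (simp add: conj_mult[OF U] Zop_mult)
  also have "\<dots> = ?e'' \<cdot>\<^sub>m pauli n ?c" by (rule Xi_props(2)[OF cg zz])
  finally have eq: "(?e * ?e' * pph n ?a ?b) \<cdot>\<^sub>m pauli n (padd ?a ?b) = ?e'' \<cdot>\<^sub>m pauli n ?c" .
  have nz: "?e * ?e' * pph n ?a ?b \<noteq> 0"
    using eps_nz[OF cg z] eps_nz[OF cg z'] pph_nz by simp
  have pc: "padd ?a ?b = ?c" using pauli_distinct[OF padd_pidx[OF a b] c nz eq] .
  show "?c = padd ?a ?b" using pc by simp
  have "?e * ?e' * pph n ?a ?b = ?e''"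
    using smult_pauli_inj[OF c] eq pc by simp
  then have "(?e * ?e) * (?e' * ?e') * pph n ?a ?b = ?e * ?e' * ?e''"
    by (metis mult.assoc mult.left_commute)
  then show "pph n ?a ?b = ?e * ?e' * ?e''"
    using eps_sq[OF cg z] eps_sq[OF cg z'] by simp
qed

lemma sign_lemma: assumes cg: "is_clifford n g" and z: "z \<in> bvecs n" and z': "z' \<in> bvecs n"
  shows "pcommute n (Xi n g z) (Xi n g z')"
    "(-1) ^ pbeta n (Xi n g z) (Xi n g z') = eps n g z * eps n g z' * eps n g (symd z z')"
proof -
  let ?a = "Xi n g z" and ?b = "Xi n g z'"
  have a: "?a \<in> pidx n" using Xi_props(1)[OF cg z] .
  have sy: "symd z' z = symd z z'" by (auto simp: symd_def)
  have pab: "padd ?b ?a = padd ?a ?b" by (auto simp: padd_def symd_def)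
  have ph: "pph n ?a ?b = eps n g z * eps n g z' * eps n g (symd z z')" using sign_core(2)[OF cg z z'] .
  have ph': "pph n ?b ?a = pph n ?a ?b" using sign_core(2)[OF cg z' z] ph sy by (simp add: mult_ac)
  show "pcommute n ?a ?b" unfolding pcommute_def pauli_mult ph' pab ..
  have zz: "symd z z' \<in> bvecs n" using z z' by (auto simp: bvecs_def symd_def)
  have pm: "pph n ?a ?b = 1 \<or> pph n ?a ?b = -1"
    using ph Xi_props(3)[OF cg z] Xi_props(3)[OF cg z'] Xi_props(3)[OF cg zz]
    by auto
  define k0 where "k0 = (if pph n ?a ?b = 1 then 0 else 1::nat)"
  have k0: "k0 < 2 \<and> pauli n ?a * pauli n ?b = ((-1) ^ k0) \<cdot>\<^sub>m pauli n (padd ?a ?b)"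
    using pm by (auto simp: k0_def pauli_mult)
  have pa: "padd ?a ?b \<in> pidx n" using padd_pidx[OF a Xi_props(1)[OF cg z']] .
  have uq: "k = k0" if "k < 2 \<and> pauli n ?a * pauli n ?b = ((-1) ^ k) \<cdot>\<^sub>m pauli n (padd ?a ?b)" for k
  proof -
    have "((-1) ^ k) \<cdot>\<^sub>m pauli n (padd ?a ?b) = ((-1::complex) ^ k0) \<cdot>\<^sub>m pauli n (padd ?a ?b)"
      using that k0 by simp
    then have "(-1::complex) ^ k = (-1) ^ k0" by (rule smult_pauli_inj[OF pa])
    then show "k = k0" using that k0 by (cases k; cases k0) auto
  qed
  have "pbeta n ?a ?b = k0" unfolding pbeta_def using k0 uq by (rule the_equality)
  then show "(-1) ^ pbeta n ?a ?b = eps n g z * eps n g z' * eps n g (symd z z')"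
    using pm ph by (auto simp: k0_def)
qed


section \<open>Summation over outcomes\<close>

lemma symd_bvecs: "z \<in> bvecs n \<Longrightarrow> z' \<in> bvecs n \<Longrightarrow> symd z z' \<in> bvecs n"
  by (auto simp: bvecs_def symd_def)

lemma delta_mult: "finite S \<Longrightarrow> c \<in> S \<Longrightarrow> (\<Sum>w\<in>S. (if w = c then d else 0) * K w) = d * (K c :: complex)"
proof -
  assume "finite S" "c \<in> S"
  have "(\<Sum>w\<in>S. (if w = c then d else 0) * K w) = (\<Sum>w\<in>S. if w = c then d * K w else 0)"
    by (intro sum.cong) auto
  then show ?thesis using \<open>finite S\<close> \<open>c \<in> S\<close> by simp
qed

lemma inner_x: fixes A B :: "nat set \<Rightarrow> complex"
  shows "(\<Sum>x<2^n. (\<Sum>w\<in>bvecs n. chi n w x / 2^n * A w) * (\<Sum>z\<in>bvecs n. chi n z x / 2^n * B z)^2)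
   = (\<Sum>z\<in>bvecs n. \<Sum>z'\<in>bvecs n. A (symd z z') * B z * B z') / 2^n / 2^n"
proof -
  let ?K = "\<lambda>w z z'. A w * B z * B z' / 2^n / 2^n / 2^n :: complex"
  have e1: "(\<Sum>w\<in>bvecs n. chi n w x / 2^n * A w) * (\<Sum>z\<in>bvecs n. chi n z x / 2^n * B z)^2
     = (\<Sum>w\<in>bvecs n. \<Sum>z\<in>bvecs n. \<Sum>z'\<in>bvecs n. (chi n w x * chi n z x * chi n z' x) * ?K w z z')" for x
  proof -
    have "(\<Sum>z\<in>bvecs n. chi n z x / 2^n * B z)^2 = (\<Sum>z\<in>bvecs n. \<Sum>z'\<in>bvecs n. (chi n z x / 2^n * B z) * (chi n z' x / 2^n * B z'))"
      unfolding power2_eq_square by (rule sum_product)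
    then have "(\<Sum>w\<in>bvecs n. chi n w x / 2^n * A w) * (\<Sum>z\<in>bvecs n. chi n z x / 2^n * B z)^2
      = (\<Sum>w\<in>bvecs n. chi n w x / 2^n * A w) * (\<Sum>z\<in>bvecs n. \<Sum>z'\<in>bvecs n. (chi n z x / 2^n * B z) * (chi n z' x / 2^n * B z'))"
      by (simp only:)
    also have "\<dots> = (\<Sum>w\<in>bvecs n. (chi n w x / 2^n * A w) * (\<Sum>z\<in>bvecs n. \<Sum>z'\<in>bvecs n. (chi n z x / 2^n * B z) * (chi n z' x / 2^n * B z')))"
      by (simp only: sum_distrib_right)
    also have "\<dots> = (\<Sum>w\<in>bvecs n. \<Sum>z\<in>bvecs n. \<Sum>z'\<in>bvecs n. (chi n w x / 2^n * A w) * ((chi n z x / 2^n * B z) * (chi n z' x / 2^n * B z')))"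
      by (simp only: sum_distrib_left)
    also have "\<dots> = (\<Sum>w\<in>bvecs n. \<Sum>z\<in>bvecs n. \<Sum>z'\<in>bvecs n. (chi n w x * chi n z x * chi n z' x) * ?K w z z')"
      by (rule sum.cong[OF refl], rule sum.cong[OF refl], rule sum.cong[OF refl]) (simp add: field_simps)
    finally show ?thesis .
  qed
  have "(\<Sum>x<2^n. (\<Sum>w\<in>bvecs n. chi n w x / 2^n * A w) * (\<Sum>z\<in>bvecs n. chi n z x / 2^n * B z)^2)
      = (\<Sum>x<2^n. \<Sum>w\<in>bvecs n. \<Sum>z\<in>bvecs n. \<Sum>z'\<in>bvecs n. (chi n w x * chi n z x * chi n z' x) * ?K w z z')"
    by (simp only: e1)
  also have "\<dots> = (\<Sum>w\<in>bvecs n. \<Sum>z\<in>bvecs n. \<Sum>z'\<in>bvecs n. \<Sum>x<2^n. (chi n w x * chi n z x * chi n z' x) * ?K w z z')"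
    by (simp only: sum.swap[of _ "{..<2^n}"])
  also have "\<dots> = (\<Sum>w\<in>bvecs n. \<Sum>z\<in>bvecs n. \<Sum>z'\<in>bvecs n. (\<Sum>x<2^n. chi n w x * chi n z x * chi n z' x) * ?K w z z')"
    by (simp only: sum_distrib_right)
  also have "\<dots> = (\<Sum>w\<in>bvecs n. \<Sum>z\<in>bvecs n. \<Sum>z'\<in>bvecs n. (if w = symd z z' then 2^n else 0) * ?K w z z')"
    by (intro sum.cong refl) (simp add: chi_fourier)
  also have "\<dots> = (\<Sum>z\<in>bvecs n. \<Sum>w\<in>bvecs n. \<Sum>z'\<in>bvecs n. (if w = symd z z' then 2^n else 0) * ?K w z z')"
    by (rule sum.swap)
  also have "\<dots> = (\<Sum>z\<in>bvecs n. \<Sum>z'\<in>bvecs n. \<Sum>w\<in>bvecs n. (if w = symd z z' then 2^n else 0) * ?K w z z')"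
    by (rule sum.cong[OF refl], rule sum.swap)
  also have "\<dots> = (\<Sum>z\<in>bvecs n. \<Sum>z'\<in>bvecs n. 2^n * ?K (symd z z') z z')"
    by (rule sum.cong[OF refl], rule sum.cong[OF refl], rule delta_mult) (auto simp: symd_bvecs)
  also have "\<dots> = (\<Sum>z\<in>bvecs n. \<Sum>z'\<in>bvecs n. A (symd z z') * B z * B z') / 2^n / 2^n"
    by (simp add: sum_divide_distrib)
  finally show ?thesis .
qed


lemma sqrt_facts: "complex_of_real (sqrt (real (2^n))) * complex_of_real (sqrt (real (2^n))) = 2^n"
  "complex_of_real (sqrt (real (2^n))) \<noteq> 0"
proof -
  have "sqrt (real (2^n)) * sqrt (real (2^n)) = real (2^n)" by simp
  then have "complex_of_real (sqrt (real (2^n)) * sqrt (real (2^n))) = complex_of_real (real (2^n))" by simp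
  then show "complex_of_real (sqrt (real (2^n))) * complex_of_real (sqrt (real (2^n))) = 2^n"
    by (simp only: of_real_mult) simp
  show "complex_of_real (sqrt (real (2^n))) \<noteq> 0" by simp
qed

lemma hs_npauli_right: "Obs \<in> carrier_mat (2^n) (2^n) \<Longrightarrow>
  hs Obs (npauli n a) = 1 / complex_of_real (sqrt (real (2^n))) * hs Obs (pauli n a)"
  unfolding npauli_def using hs_smult_right[OF _ pauli_carrier, of Obs n] by simp

lemma hs_npauli_left: "L \<in> carrier_mat (2^n) (2^n) \<Longrightarrow>
  hs (npauli n a) L = 1 / complex_of_real (sqrt (real (2^n))) * hs (pauli n a) L"
  unfolding npauli_def by (subst hs_smult_left[of _ "2^n"]) simp_all

lemma per_g_moment: assumes fin: "finite G" and cl: "\<forall>g\<in>G. is_clifford n g"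
  and bij: "bij_betw (Sop n G p) (carrier_mat (2^n) (2^n)) (carrier_mat (2^n) (2^n))"
  and g: "g \<in> G" and O: "Obs \<in> carrier_mat (2^n) (2^n)" and L: "\<Lambda> g \<rho> \<in> carrier_mat (2^n) (2^n)"
  shows "(\<Sum>x<2^n. outprob \<Lambda> \<rho> g x * (ohat n G p Obs g x)\<^sup>2)
    = 1 / complex_of_real (sqrt (real (2^n))) *
      (\<Sum>z\<in>bvecs n. \<Sum>z'\<in>bvecs n.
        complex_of_real ((-1) ^ pbeta n (Xi n g z) (Xi n g z') / (s1 n G p (Xi n g z) * s1 n G p (Xi n g z'))) *
        hs Obs (npauli n (Xi n g z)) * hs Obs (npauli n (Xi n g z')) *
        hs (npauli n (padd (Xi n g z) (Xi n g z'))) (\<Lambda> g \<rho>))"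
proof -
  have cg: "is_clifford n g" using cl g by auto
  let ?q = "complex_of_real (sqrt (real (2^n)))"
  let ?L = "\<Lambda> g \<rho>"
  define A where "A w = eps n g w * hs (pauli n (Xi n g w)) ?L" for w
  define B where "B z = eps n g z / complex_of_real (s1 n G p (Xi n g z)) * hs Obs (pauli n (Xi n g z))" for z
  have op: "outprob \<Lambda> \<rho> g x = (\<Sum>w\<in>bvecs n. chi n w x / 2^n * A w)" if x: "x < 2^n" for x
    unfolding outprob_formula[of n g x \<Lambda> \<rho>, OF cg x L] A_def by (intro sum.cong refl) (simp add: mult_ac)
  have oh: "ohat n G p Obs g x = (\<Sum>z\<in>bvecs n. chi n z x / 2^n * B z)" if x: "x < 2^n" for x
    unfolding ohat_formula[OF fin cl bij g x O] B_def by (intro sum.cong refl) (simp add: mult_ac)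
  have "(\<Sum>x<2^n. outprob \<Lambda> \<rho> g x * (ohat n G p Obs g x)\<^sup>2)
      = (\<Sum>x<2^n. (\<Sum>w\<in>bvecs n. chi n w x / 2^n * A w) * (\<Sum>z\<in>bvecs n. chi n z x / 2^n * B z)^2)"
    by (intro sum.cong refl) (simp add: op oh)
  also have "\<dots> = (\<Sum>z\<in>bvecs n. \<Sum>z'\<in>bvecs n. A (symd z z') * B z * B z') / 2^n / 2^n"
    by (rule inner_x)
  also have "\<dots> = (\<Sum>z\<in>bvecs n. \<Sum>z'\<in>bvecs n. A (symd z z') * B z * B z' / 2^n / 2^n)"
    by (simp add: sum_divide_distrib)
  also have "\<dots> = (\<Sum>z\<in>bvecs n. \<Sum>z'\<in>bvecs n. 1 / ?q *
        (complex_of_real ((-1) ^ pbeta n (Xi n g z) (Xi n g z') / (s1 n G p (Xi n g z) * s1 n G p (Xi n g z'))) *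
        hs Obs (npauli n (Xi n g z)) * hs Obs (npauli n (Xi n g z')) *
        hs (npauli n (padd (Xi n g z) (Xi n g z'))) ?L))"
  proof (rule sum.cong[OF refl], rule sum.cong[OF refl])
    fix z z' assume z: "z \<in> bvecs n" and z': "z' \<in> bvecs n"
    let ?a = "Xi n g z" and ?b = "Xi n g z'"
    let ?sa = "complex_of_real (s1 n G p ?a)" and ?sb = "complex_of_real (s1 n G p ?b)"
    have sg: "complex_of_real ((-1) ^ pbeta n ?a ?b) = eps n g z * eps n g z' * eps n g (symd z z')"
      using sign_lemma(2)[OF cg z z'] by simp
    have Asym: "A (symd z z') = eps n g (symd z z') * hs (pauli n (padd ?a ?b)) ?L"
      unfolding A_def sign_core(1)[OF cg z z'] ..
    have R: "complex_of_real ((-1) ^ pbeta n ?a ?b / (s1 n G p ?a * s1 n G p ?b)) =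
       eps n g z * eps n g z' * eps n g (symd z z') / (?sa * ?sb)"
      using sg by simp
    have q2: "(2::complex)^n = ?q * ?q" using sqrt_facts(1)[of n] by simp
    have "A (symd z z') * B z * B z' / 2^n / 2^n =
       eps n g (symd z z') * hs (pauli n (padd ?a ?b)) ?L *
       (eps n g z / ?sa * hs Obs (pauli n ?a)) * (eps n g z' / ?sb * hs Obs (pauli n ?b)) / (?q * ?q) / (?q * ?q)"
      unfolding Asym B_def q2 ..
    also have "\<dots> = 1 / ?q * (eps n g z * eps n g z' * eps n g (symd z z') / (?sa * ?sb) *
        (1 / ?q * hs Obs (pauli n ?a)) * (1 / ?q * hs Obs (pauli n ?b)) *
        (1 / ?q * hs (pauli n (padd ?a ?b)) ?L))"
      by (simp add: field_simps)
    also have "\<dots> = 1 / ?q *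
        (complex_of_real ((-1) ^ pbeta n ?a ?b / (s1 n G p ?a * s1 n G p ?b)) *
        hs Obs (npauli n ?a) * hs Obs (npauli n ?b) * hs (npauli n (padd ?a ?b)) ?L)"
      unfolding R hs_npauli_right[OF O] hs_npauli_left[OF L] ..
    finally show "A (symd z z') * B z * B z' / 2^n / 2^n = 1 / ?q *
        (complex_of_real ((-1) ^ pbeta n ?a ?b / (s1 n G p ?a * s1 n G p ?b)) *
        hs Obs (npauli n ?a) * hs Obs (npauli n ?b) * hs (npauli n (padd ?a ?b)) ?L)" .
  qed
  also have "\<dots> = 1 / ?q *
      (\<Sum>z\<in>bvecs n. \<Sum>z'\<in>bvecs n.
        complex_of_real ((-1) ^ pbeta n (Xi n g z) (Xi n g z') / (s1 n G p (Xi n g z) * s1 n G p (Xi n g z'))) *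
        hs Obs (npauli n (Xi n g z)) * hs Obs (npauli n (Xi n g z')) *
        hs (npauli n (padd (Xi n g z) (Xi n g z'))) ?L)"
    by (simp only: sum_distrib_left)
  finally show ?thesis .
qed


lemma fiber_swap: fixes H :: "'a \<Rightarrow> 'a \<Rightarrow> 'g \<Rightarrow> complex"
  assumes C: "finite C" and G: "finite G" and Z: "finite Z"
    and mem: "\<And>g z z'. g \<in> G \<Longrightarrow> z \<in> Z \<Longrightarrow> z' \<in> Z \<Longrightarrow> (f g z, f g z') \<in> C"
  shows "(\<Sum>(a, b)\<in>C. \<Sum>z\<in>Z. \<Sum>z'\<in>Z. \<Sum>g\<in>{g\<in>G. f g z = a \<and> f g z' = b}. H a b g)
       = (\<Sum>g\<in>G. \<Sum>z\<in>Z. \<Sum>z'\<in>Z. H (f g z) (f g z') g)"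
proof -
  have "(\<Sum>(a, b)\<in>C. \<Sum>z\<in>Z. \<Sum>z'\<in>Z. \<Sum>g\<in>{g\<in>G. f g z = a \<and> f g z' = b}. H a b g)
      = (\<Sum>c\<in>C. \<Sum>z\<in>Z. \<Sum>z'\<in>Z. \<Sum>g\<in>G. if (f g z, f g z') = c then H (fst c) (snd c) g else 0)"
  proof (rule sum.cong[OF refl])
    fix c assume "c \<in> C"
    obtain a b where c: "c = (a, b)" by (cases c)
    show "(case c of (a, b) \<Rightarrow> \<Sum>z\<in>Z. \<Sum>z'\<in>Z. \<Sum>g\<in>{g\<in>G. f g z = a \<and> f g z' = b}. H a b g)
      = (\<Sum>z\<in>Z. \<Sum>z'\<in>Z. \<Sum>g\<in>G. if (f g z, f g z') = c then H (fst c) (snd c) g else 0)"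
      unfolding c fst_conv snd_conv prod.case prod.inject by (simp only: sum.inter_filter[OF G])
  qed
  also have "\<dots> = (\<Sum>z\<in>Z. \<Sum>c\<in>C. \<Sum>z'\<in>Z. \<Sum>g\<in>G. if (f g z, f g z') = c then H (fst c) (snd c) g else 0)"
    by (rule sum.swap)
  also have "\<dots> = (\<Sum>z\<in>Z. \<Sum>z'\<in>Z. \<Sum>c\<in>C. \<Sum>g\<in>G. if (f g z, f g z') = c then H (fst c) (snd c) g else 0)"
    by (rule sum.cong[OF refl], rule sum.swap)
  also have "\<dots> = (\<Sum>z\<in>Z. \<Sum>z'\<in>Z. \<Sum>g\<in>G. \<Sum>c\<in>C. if (f g z, f g z') = c then H (fst c) (snd c) g else 0)"
    by (rule sum.cong[OF refl], rule sum.cong[OF refl], rule sum.swap)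
  also have "\<dots> = (\<Sum>z\<in>Z. \<Sum>z'\<in>Z. \<Sum>g\<in>G. H (f g z) (f g z') g)"
  proof (rule sum.cong[OF refl], rule sum.cong[OF refl], rule sum.cong[OF refl])
    fix z z' g assume "z \<in> Z" "z' \<in> Z" "g \<in> G"
    then have m: "(f g z, f g z') \<in> C" using mem by blast
    show "(\<Sum>c\<in>C. if (f g z, f g z') = c then H (fst c) (snd c) g else 0) = H (f g z) (f g z') g"
      using m C by (simp add: sum.delta)
  qed
  also have "\<dots> = (\<Sum>z\<in>Z. \<Sum>g\<in>G. \<Sum>z'\<in>Z. H (f g z) (f g z') g)"
    by (rule sum.cong[OF refl], rule sum.swap)
  also have "\<dots> = (\<Sum>g\<in>G. \<Sum>z\<in>Z. \<Sum>z'\<in>Z. H (f g z) (f g z') g)"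
    by (rule sum.swap)
  finally show ?thesis .
qed

definition Gset :: "nat \<Rightarrow> complex mat set \<Rightarrow> nat set \<times> nat set \<Rightarrow> nat set \<times> nat set \<Rightarrow> nat set \<Rightarrow> nat set \<Rightarrow> complex mat set" where
  "Gset n G a b z z' = {g\<in>G. Xi n g z = a \<and> Xi n g z' = b}"

lemma Lbar_msum: "Lbar n G p \<Lambda> a b A = complex_of_real (inverse (r2 n G p a b)) \<cdot>\<^sub>m
   msum (2^n) (bvecs n) (\<lambda>_. 1) (\<lambda>z. msum (2^n) (bvecs n) (\<lambda>_. 1)
     (\<lambda>z'. msum (2^n) (Gset n G a b z z') (\<lambda>g. complex_of_real (p g)) (\<lambda>g. \<Lambda> g A)))"
  by (rule eq_matI) (auto simp: Lbar_def msum_index Gset_def)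

lemma hs_Lbar: assumes M: "M \<in> carrier_mat (2^n) (2^n)"
  and L: "\<forall>g\<in>G. \<Lambda> g A \<in> carrier_mat (2^n) (2^n)"
  shows "hs M (Lbar n G p \<Lambda> a b A) = complex_of_real (inverse (r2 n G p a b)) *
    (\<Sum>z\<in>bvecs n. \<Sum>z'\<in>bvecs n. \<Sum>g\<in>Gset n G a b z z'. complex_of_real (p g) * hs M (\<Lambda> g A))"
proof -
  have L': "\<forall>g\<in>Gset n G a b z z'. \<Lambda> g A \<in> carrier_mat (2^n) (2^n)" for z z'
    using L by (auto simp: Gset_def)
  show ?thesis
    unfolding Lbar_msum hs_smult_right[OF M msum_carrier]
    by (simp add: hs_msum_right[OF M] L')
qed

lemma r2_zero: assumes "finite G" "\<forall>g\<in>G. p g \<ge> 0" "r2 n G p a b = 0"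
  and z: "z \<in> bvecs n" and z': "z' \<in> bvecs n" and g: "g \<in> Gset n G a b z z'"
  shows "p g = 0"
proof -
  have fin: "finite (Gset n G a b z z')" for z z' using assms(1) by (simp add: Gset_def)
  have nn: "0 \<le> p g" if "g \<in> Gset n G a b z z'" for g z z' using that assms(2) by (auto simp: Gset_def)
  have "r2 n G p a b = (\<Sum>z\<in>bvecs n. \<Sum>z'\<in>bvecs n. \<Sum>g\<in>Gset n G a b z z'. p g)"
    by (simp add: r2_def Gset_def)
  then have s0: "(\<Sum>z\<in>bvecs n. \<Sum>z'\<in>bvecs n. \<Sum>g\<in>Gset n G a b z z'. p g) = 0"
    using assms(3) by simp
  have nn2: "\<forall>z\<in>bvecs n. 0 \<le> (\<Sum>z'\<in>bvecs n. \<Sum>g\<in>Gset n G a b z z'. p g)"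
    by (auto intro!: sum_nonneg nn)
  have "(\<Sum>z'\<in>bvecs n. \<Sum>g\<in>Gset n G a b z z'. p g) = 0"
    using sum_nonneg_eq_0_iff[of "bvecs n" "\<lambda>z. \<Sum>z'\<in>bvecs n. \<Sum>g\<in>Gset n G a b z z'. p g"] s0 nn2 z by simp
  moreover have nn1: "\<forall>z'\<in>bvecs n. 0 \<le> (\<Sum>g\<in>Gset n G a b z z'. p g)"
    by (auto intro!: sum_nonneg nn)
  ultimately have "(\<Sum>g\<in>Gset n G a b z z'. p g) = 0"
    using sum_nonneg_eq_0_iff[of "bvecs n" "\<lambda>z'. \<Sum>g\<in>Gset n G a b z z'. p g"] z' by simp
  moreover have "\<forall>g\<in>Gset n G a b z z'. 0 \<le> p g" using nn by blast
  ultimately show "p g = 0" using sum_nonneg_eq_0_iff[of "Gset n G a b z z'" p] fin g by simp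
qed


lemma T_term: assumes fin: "finite G" and pnn: "\<forall>g\<in>G. p g \<ge> 0"
  and M: "Obs \<in> carrier_mat (2^n) (2^n)" and L: "\<forall>g\<in>G. \<Lambda> g \<rho> \<in> carrier_mat (2^n) (2^n)"
  shows "complex_of_real (s2 n G p a b / (s1 n G p a * s1 n G p b)) *
       hs Obs (npauli n a) * hs Obs (npauli n b) *
       hs (npauli n (padd a b)) (Lbar n G p \<Lambda> a b \<rho>)
    = (\<Sum>z\<in>bvecs n. \<Sum>z'\<in>bvecs n. \<Sum>g\<in>{g\<in>G. Xi n g z = a \<and> Xi n g z' = b}.
        complex_of_real (p g) * (complex_of_real ((-1) ^ pbeta n a b / (s1 n G p a * s1 n G p b)) *
        hs Obs (npauli n a) * hs Obs (npauli n b) * hs (npauli n (padd a b)) (\<Lambda> g \<rho>)))"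
proof -
  let ?K = "complex_of_real ((-1) ^ pbeta n a b / (s1 n G p a * s1 n G p b)) * hs Obs (npauli n a) * hs Obs (npauli n b)"
  let ?h = "\<lambda>g. hs (npauli n (padd a b)) (\<Lambda> g \<rho>)"
  let ?X = "\<Sum>z\<in>bvecs n. \<Sum>z'\<in>bvecs n. \<Sum>g\<in>Gset n G a b z z'. complex_of_real (p g) * ?h g"
  have np: "npauli n (padd a b) \<in> carrier_mat (2^n) (2^n)" by (simp add: npauli_def)
  have hL: "hs (npauli n (padd a b)) (Lbar n G p \<Lambda> a b \<rho>) = complex_of_real (inverse (r2 n G p a b)) * ?X"
    by (rule hs_Lbar[where \<Lambda>=\<Lambda> and A=\<rho> and G=G, OF np L])
  have key: "complex_of_real (s2 n G p a b / (s1 n G p a * s1 n G p b)) * complex_of_real (inverse (r2 n G p a b)) * ?X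
      = complex_of_real ((-1) ^ pbeta n a b / (s1 n G p a * s1 n G p b)) * ?X"
  proof (cases "r2 n G p a b = 0")
    case True
    have "?X = 0"
      using r2_zero[OF fin pnn True] by (auto intro!: sum.neutral)
    then show ?thesis by simp
  next
    case False
    have "complex_of_real (s2 n G p a b / (s1 n G p a * s1 n G p b)) * complex_of_real (inverse (r2 n G p a b))
        = complex_of_real (s2 n G p a b / (s1 n G p a * s1 n G p b) * inverse (r2 n G p a b))" by simp
    also have "s2 n G p a b / (s1 n G p a * s1 n G p b) * inverse (r2 n G p a b) = (-1) ^ pbeta n a b / (s1 n G p a * s1 n G p b)"
      using False by (simp add: s2_def field_simps)
    finally have e: "complex_of_real (s2 n G p a b / (s1 n G p a * s1 n G p b)) * complex_of_real (inverse (r2 n G p a b))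
        = complex_of_real ((-1) ^ pbeta n a b / (s1 n G p a * s1 n G p b))" .
    show ?thesis by (simp only: e)
  qed
  have "complex_of_real (s2 n G p a b / (s1 n G p a * s1 n G p b)) *
       hs Obs (npauli n a) * hs Obs (npauli n b) * hs (npauli n (padd a b)) (Lbar n G p \<Lambda> a b \<rho>)
      = hs Obs (npauli n a) * hs Obs (npauli n b) *
        (complex_of_real (s2 n G p a b / (s1 n G p a * s1 n G p b)) * complex_of_real (inverse (r2 n G p a b)) * ?X)"
    unfolding hL by (simp only: mult_ac)
  also have "\<dots> = ?K * ?X" unfolding key by (simp only: mult_ac)
  also have "\<dots> = (\<Sum>z\<in>bvecs n. \<Sum>z'\<in>bvecs n. \<Sum>g\<in>Gset n G a b z z'. complex_of_real (p g) * (?K * ?h g))"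
    by (simp only: sum_distrib_left mult_ac)
  finally show ?thesis by (simp only: Gset_def)
qed

theorem lemma5:
  fixes n :: nat
    and G :: "complex mat set"
    and p :: "complex mat \<Rightarrow> real"
    and \<Lambda> :: "complex mat \<Rightarrow> complex mat \<Rightarrow> complex mat"
    and Obs \<rho> :: "complex mat"
  assumes "finite G"
    and "\<forall>g\<in>G. is_clifford n g"
    and "\<forall>g\<in>G. p g \<ge> 0"
    and "(\<Sum>g\<in>G. p g) = 1"
    and "bij_betw (Sop n G p) (carrier_mat (2^n) (2^n)) (carrier_mat (2^n) (2^n))"
    and "\<forall>g\<in>G. is_channel (2^n) (\<Lambda> g)"
    and "is_observable (2^n) Obs"
    and "is_state (2^n) \<rho>"
  shows "second_moment n G p \<Lambda> Obs \<rho> =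
    (1 / complex_of_real (sqrt (real (2^n)))) *
    (\<Sum>(a, b) \<in> {(a, b). a \<in> pidx n \<and> b \<in> pidx n \<and> pcommute n a b}.
       complex_of_real (s2 n G p a b / (s1 n G p a * s1 n G p b)) *
       hs Obs (npauli n a) * hs Obs (npauli n b) *
       hs (npauli n (padd a b)) (Lbar n G p \<Lambda> a b \<rho>))"
proof -
  note fin = assms(1) and cl = assms(2) and pnn = assms(3) and bij = assms(5)
  let ?q = "complex_of_real (sqrt (real (2^n)))"
  let ?C = "{(a, b). a \<in> pidx n \<and> b \<in> pidx n \<and> pcommute n a b}"
  have O: "Obs \<in> carrier_mat (2^n) (2^n)" using assms(7) by (simp add: is_observable_def)
  have rho: "\<rho> \<in> carrier_mat (2^n) (2^n)" using assms(8) by (simp add: is_state_def is_psd_def)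
  have L: "\<forall>g\<in>G. \<Lambda> g \<rho> \<in> carrier_mat (2^n) (2^n)"
    using assms(6) rho by (simp add: is_channel_def is_linear_superop_def)
  define F where "F a b g = complex_of_real ((-1) ^ pbeta n a b / (s1 n G p a * s1 n G p b)) *
        hs Obs (npauli n a) * hs Obs (npauli n b) * hs (npauli n (padd a b)) (\<Lambda> g \<rho>)" for a b g
  have "second_moment n G p \<Lambda> Obs \<rho>
      = (\<Sum>g\<in>G. complex_of_real (p g) * (1 / ?q * (\<Sum>z\<in>bvecs n. \<Sum>z'\<in>bvecs n. F (Xi n g z) (Xi n g z') g)))"
    unfolding second_moment_def F_def
    by (intro sum.cong refl) (simp add: per_g_moment[OF fin cl bij _ O] L)
  also have "\<dots> = 1 / ?q * (\<Sum>g\<in>G. \<Sum>z\<in>bvecs n. \<Sum>z'\<in>bvecs n. complex_of_real (p g) * F (Xi n g z) (Xi n g z') g)"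
    by (simp add: sum_distrib_left mult_ac)
  also have "(\<Sum>g\<in>G. \<Sum>z\<in>bvecs n. \<Sum>z'\<in>bvecs n. complex_of_real (p g) * F (Xi n g z) (Xi n g z') g)
      = (\<Sum>(a, b)\<in>?C. \<Sum>z\<in>bvecs n. \<Sum>z'\<in>bvecs n. \<Sum>g\<in>{g\<in>G. Xi n g z = a \<and> Xi n g z' = b}. complex_of_real (p g) * F a b g)"
  proof (rule fiber_swap[symmetric])
    have "?C \<subseteq> pidx n \<times> pidx n" by auto
    moreover have "finite (pidx n)" by (simp add: pidx_def)
    ultimately show "finite ?C" by (meson finite_SigmaI finite_subset)
    show "finite G" by (rule fin)
    show "finite (bvecs n)" by simp
    fix g z z' assume g: "g \<in> G" and z: "z \<in> bvecs n" and z': "z' \<in> bvecs n"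
    have cg: "is_clifford n g" using cl g by auto
    show "(Xi n g z, Xi n g z') \<in> ?C"
      using Xi_props(1)[OF cg z] Xi_props(1)[OF cg z'] sign_lemma(1)[OF cg z z'] by simp
  qed
  also have "\<dots> = (\<Sum>(a, b)\<in>?C. complex_of_real (s2 n G p a b / (s1 n G p a * s1 n G p b)) *
       hs Obs (npauli n a) * hs Obs (npauli n b) *
       hs (npauli n (padd a b)) (Lbar n G p \<Lambda> a b \<rho>))"
  proof (rule sum.cong[OF refl])
    fix c assume "c \<in> ?C"
    obtain a b where c: "c = (a, b)" by (cases c)
    show "(case c of (a, b) \<Rightarrow> \<Sum>z\<in>bvecs n. \<Sum>z'\<in>bvecs n. \<Sum>g\<in>{g\<in>G. Xi n g z = a \<and> Xi n g z' = b}. complex_of_real (p g) * F a b g)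
      = (case c of (a, b) \<Rightarrow> complex_of_real (s2 n G p a b / (s1 n G p a * s1 n G p b)) *
       hs Obs (npauli n a) * hs Obs (npauli n b) *
       hs (npauli n (padd a b)) (Lbar n G p \<Lambda> a b \<rho>))"
      unfolding c prod.case F_def by (rule T_term[where \<Lambda>=\<Lambda> and \<rho>=\<rho> and a=a and b=b, OF fin pnn O L, symmetric])
  qed
  finally show ?thesis .
qed


end
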